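(* Let $n,m\ge1$. For each $i\in[n]$ let $d_i$ be a positive integer and $p_{i0}<\cdots<p_{id_i}$ reals, $\mathcal{X}=\prod_{i}\{p_{i0},\dots,p_{id_i}\}$, and $P=\{\boldsymbol{x}:A\boldsymbol{x}\ge\boldsymbol{h}\}$ a polytope. For $t\in[m]$, $i\in[n]$ let $f^t_i:\{p_{i0},\dots,p_{id_i}\}\to[L^t_i,U^t_i]$ and $\phi^t:\prod_i[L^t_i,U^t_i]\to\mathbb{R}$, let $\ell^t_i(\boldsymbol{z}_i)=f^t_i(p_{i0})+\sum_{j\in[d_i]}(f^t_i(p_{ij})-f^t_i(p_{i,j-1}))z_{ij}$, and $G=\{(\boldsymbol{z},\boldsymbol{\mu})\in\operatorname{vert}(\Delta)\times\mathbb{R}^m:\mu^t=\phi^t(\ell^t_1(\boldsymbol{z}_1),\dots,\ell^t_n(\boldsymbol{z}_n))\ \forall t\}$. For each $i\in[n]$ let $r_i$ be a positive integer and $Q_i\subseteq\mathbb{R}^{d_i}\times\mathbb{R}^{r_i}$ a polytope in variables $(\boldsymbol{z}_i,\boldsymbol{\delta}_i)$ such that the projection of $Q_i\cap(\mathbb{R}^{d_i}\times\{0,1\}^{r_i})$ onto $\boldsymbol{z}_i$ equals $\operatorname{vert}(\Delta^{d_i})$. Then $$E=\bigl\{(\boldsymbol{x},\boldsymbol{z},\boldsymbol{\mu},\boldsymbol{\delta}): (\boldsymbol{z},\boldsymbol{\mu})\in\operatorname{conv}(G),\ \boldsymbol{x}\in P,\ (x_i,\boldsymbol{z}_i)\in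 B_i,\ (\boldsymbol{z}_i,\boldsymbol{\delta}_i)\in Q_i,\ \boldsymbol{\delta}_i\in\{0,1\}^{r_i}\ \forall i\in[n]\bigr\}$$ is an MIP formulation of $\{(\boldsymbol{x},\boldsymbol{\mu}):\boldsymbol{x}\in P\cap\mathcal{X},\ \mu^t=\phi^t(f^t_1(x_1),\dots,f^t_n(x_n))\ \forall t\}$. Moreover, if each $Q_i\cap(\mathbb{R}^{d_i}\times\{0,1\}^{r_i})$ is ideal (every vertex of $Q_i$ has binary $\boldsymbol{\delta}_i$) and the polyhedral constraint is absent ($P$ replaced by $\mathbb{R}^n$), then $E$ is ideal (every vertex of the relaxation obtained by dropping $\boldsymbol{\delta}_i\in\{0,1\}^{r_i}$ has binary $\boldsymbol{\delta}$).
   Context: $[n]=\{1,\dots,n\}$. $\Delta^d=\{\boldsymbol{z}\in\mathbb{R}^d:1\ge z_1\ge\cdots\ge z_d\ge0\}$, $\Delta=\Delta^{d_1}\times\cdots\times\Delta^{d_n}$, $\operatorname{vert}(\Delta)=\Delta\cap\{0,1\}^{\sum_i d_i}$. $B_i=\{(x_i,\boldsymbol{z}_i):x_i=p_{i0}+\sum_{j\in[d_i]}(p_{ij}-p_{i,j-1})z_{ij},\ \boldsymbol{z}_i\in\Delta^{d_i}\}$. An MIP formulation of a set $S$ is a polyhedron with binary restrictions on some variables whose projection onto the original variables equals $S$. *)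

theory Defs
  imports "HOL-Analysis.Analysis"
begin

text \<open>Vectors are functions from a (finite) coordinate index set into the reals,
  extended by 0 outside the index set.\<close>

definition supp_in :: "'a set \<Rightarrow> ('a \<Rightarrow> real) \<Rightarrow> bool" where
  "supp_in I v \<longleftrightarrow> (\<forall>c. c \<notin> I \<longrightarrow> v c = 0)"

definition restr :: "'a set \<Rightarrow> ('a \<Rightarrow> real) \<Rightarrow> ('a \<Rightarrow> real)" where
  "restr C v = (\<lambda>c. if c \<in> C then v c else 0)"

definition polyhedron_in :: "'a set \<Rightarrow> ('a \<Rightarrow> real) set \<Rightarrow> bool" where
  "polyhedron_in I S \<longleftrightarrow> finite I \<and>
     (\<exists>(K::nat) (a::nat \<Rightarrow> 'a \<Rightarrow> real) (b::nat \<Rightarrow> real).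
        S = {v. supp_in I v \<and> (\<forall>k<K. (\<Sum>c\<in>I. a k c * v c) \<ge> b k)})"

definition polytope_in :: "'a set \<Rightarrow> ('a \<Rightarrow> real) set \<Rightarrow> bool" where
  "polytope_in I S \<longleftrightarrow> polyhedron_in I S \<and> (\<exists>B. \<forall>v\<in>S. \<forall>c. \<bar>v c\<bar> \<le> B)"

definition conv_hull :: "('a \<Rightarrow> real) set \<Rightarrow> ('a \<Rightarrow> real) set" where
  "conv_hull S = {v. \<exists>(k::nat) (u::nat \<Rightarrow> real) (w::nat \<Rightarrow> 'a \<Rightarrow> real).
      (\<forall>l<k. u l \<ge> 0 \<and> w l \<in> S) \<and> (\<Sum>l<k. u l) = 1 \<and> v = (\<lambda>c. \<Sum>l<k. u l * w l c)}"

definition is_vertex :: "('a \<Rightarrow> real) \<Rightarrow> ('a \<Rightarrow> real) set \<Rightarrow> bool" where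
  "is_vertex v S \<longleftrightarrow> v \<in> S \<and>
     \<not> (\<exists>a\<in>S. \<exists>b\<in>S. a \<noteq> b \<and> (\<exists>\<theta>::real. 0 < \<theta> \<and> \<theta> < 1 \<and> v = (\<lambda>c. (1 - \<theta>) * a c + \<theta> * b c)))"

definition Delta_simplex :: "nat \<Rightarrow> (nat \<Rightarrow> real) set" where
  "Delta_simplex d = {z. supp_in {1..d} z \<and> (d \<ge> 1 \<longrightarrow> z 1 \<le> 1 \<and> z d \<ge> 0) \<and>
                  (\<forall>j. 1 \<le> j \<and> j < d \<longrightarrow> z j \<ge> z (j + 1))}"

definition vert_simplex :: "nat \<Rightarrow> (nat \<Rightarrow> real) set" where
  "vert_simplex d = Delta_simplex d \<inter> {z. \<forall>j\<in>{1..d}. z j \<in> {0, 1}}"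

definition mip_formulation ::
    "'a set \<Rightarrow> 'a set \<Rightarrow> 'a set \<Rightarrow> ('a \<Rightarrow> real) set \<Rightarrow> ('a \<Rightarrow> real) set \<Rightarrow> bool" where
  "mip_formulation I J Orig E S \<longleftrightarrow> J \<subseteq> I \<and> Orig \<subseteq> I \<and>
     (\<exists>R. polyhedron_in I R \<and> E = R \<inter> {v. \<forall>c\<in>J. v c \<in> {0, 1}}) \<and>
     restr Orig ` E = S"

text \<open>Coordinates of the extended space (x, z, mu, delta).\<close>
datatype coord = X nat | Z nat nat | Mu nat | Dl nat nat

definition IX :: "nat \<Rightarrow> coord set" where "IX n = X ` {1..n}"
definition IZ :: "nat \<Rightarrow> (nat \<Rightarrow> nat) \<Rightarrow> coord set" where
  "IZ n d = {Z i j | i j. i \<in> {1..n} \<and> j \<in> {1..d i}}"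
definition IM :: "nat \<Rightarrow> coord set" where "IM m = Mu ` {1..m}"
definition ID :: "nat \<Rightarrow> (nat \<Rightarrow> nat) \<Rightarrow> coord set" where
  "ID n r = {Dl i k | i k. i \<in> {1..n} \<and> k \<in> {1..r i}}"

definition zvec :: "(coord \<Rightarrow> real) \<Rightarrow> nat \<Rightarrow> nat \<Rightarrow> real" where
  "zvec v i = (\<lambda>j. v (Z i j))"

text \<open>(z_i, delta_i) as a vector in R^{d_i} x R^{r_i}, coordinates Inl j / Inr k.\<close>
definition zdvec :: "(coord \<Rightarrow> real) \<Rightarrow> nat \<Rightarrow> nat + nat \<Rightarrow> real" where
  "zdvec v i = (\<lambda>q. case q of Inl j \<Rightarrow> v (Z i j) | Inr k \<Rightarrow> v (Dl i k))"

definition Bset :: "(nat \<Rightarrow> nat) \<Rightarrow> (nat \<Rightarrow> nat \<Rightarrow> real) \<Rightarrow> nat \<Rightarrow> (real \<times> (nat \<Rightarrow> real)) set" where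
  "Bset d p i = {(xi, z). xi = p i 0 + (\<Sum>j\<in>{1..d i}. (p i j - p i (j - 1)) * z j) \<and> z \<in> Delta_simplex (d i)}"

definition ell :: "(nat \<Rightarrow> nat) \<Rightarrow> (nat \<Rightarrow> nat \<Rightarrow> real) \<Rightarrow> (nat \<Rightarrow> nat \<Rightarrow> real \<Rightarrow> real)
                   \<Rightarrow> nat \<Rightarrow> nat \<Rightarrow> (nat \<Rightarrow> real) \<Rightarrow> real" where
  "ell d p f t i z = f t i (p i 0) + (\<Sum>j\<in>{1..d i}. (f t i (p i j) - f t i (p i (j - 1))) * z j)"

definition Gset :: "nat \<Rightarrow> nat \<Rightarrow> (nat \<Rightarrow> nat) \<Rightarrow> (nat \<Rightarrow> nat \<Rightarrow> real)
      \<Rightarrow> (nat \<Rightarrow> nat \<Rightarrow> real \<Rightarrow> real) \<Rightarrow> (nat \<Rightarrow> (nat \<Rightarrow> real) \<Rightarrow> real) \<Rightarrow> (coord \<Rightarrow> real) set" where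
  "Gset n m d p f \<phi> = {v. supp_in (IZ n d \<union> IM m) v \<and>
       (\<forall>i\<in>{1..n}. zvec v i \<in> vert_simplex (d i)) \<and>
       (\<forall>t\<in>{1..m}. v (Mu t) = \<phi> t (\<lambda>i. if i \<in> {1..n} then ell d p f t i (zvec v i) else 0))}"

definition Erel :: "nat \<Rightarrow> nat \<Rightarrow> (nat \<Rightarrow> nat) \<Rightarrow> (nat \<Rightarrow> nat \<Rightarrow> real) \<Rightarrow> (nat \<Rightarrow> nat)
      \<Rightarrow> (nat \<Rightarrow> nat \<Rightarrow> real \<Rightarrow> real) \<Rightarrow> (nat \<Rightarrow> (nat \<Rightarrow> real) \<Rightarrow> real)
      \<Rightarrow> (nat \<Rightarrow> real) set \<Rightarrow> (nat \<Rightarrow> (nat + nat \<Rightarrow> real) set) \<Rightarrow> (coord \<Rightarrow> real) set" where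
  "Erel n m d p r f \<phi> P Q = {v. supp_in (IX n \<union> IZ n d \<union> IM m \<union> ID n r) v \<and>
       restr (IZ n d \<union> IM m) v \<in> conv_hull (Gset n m d p f \<phi>) \<and>
       (\<lambda>i. v (X i)) \<in> P \<and>
       (\<forall>i\<in>{1..n}. (v (X i), zvec v i) \<in> Bset d p i \<and> zdvec v i \<in> Q i)}"

definition Eset :: "nat \<Rightarrow> nat \<Rightarrow> (nat \<Rightarrow> nat) \<Rightarrow> (nat \<Rightarrow> nat \<Rightarrow> real) \<Rightarrow> (nat \<Rightarrow> nat)
      \<Rightarrow> (nat \<Rightarrow> nat \<Rightarrow> real \<Rightarrow> real) \<Rightarrow> (nat \<Rightarrow> (nat \<Rightarrow> real) \<Rightarrow> real)
      \<Rightarrow> (nat \<Rightarrow> real) set \<Rightarrow> (nat \<Rightarrow> (nat + nat \<Rightarrow> real) set) \<Rightarrow> (coord \<Rightarrow> real) set" where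
  "Eset n m d p r f \<phi> P Q = Erel n m d p r f \<phi> P Q \<inter> {v. \<forall>c\<in>ID n r. v c \<in> {0, 1}}"

definition Target :: "nat \<Rightarrow> nat \<Rightarrow> (nat \<Rightarrow> nat) \<Rightarrow> (nat \<Rightarrow> nat \<Rightarrow> real)
      \<Rightarrow> (nat \<Rightarrow> nat \<Rightarrow> real \<Rightarrow> real) \<Rightarrow> (nat \<Rightarrow> (nat \<Rightarrow> real) \<Rightarrow> real)
      \<Rightarrow> (nat \<Rightarrow> real) set \<Rightarrow> (coord \<Rightarrow> real) set" where
  "Target n m d p f \<phi> P = {v. supp_in (IX n \<union> IM m) v \<and>
       (\<lambda>i. v (X i)) \<in> P \<and> (\<forall>i\<in>{1..n}. v (X i) \<in> p i ` {0..d i}) \<and>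
       (\<forall>t\<in>{1..m}. v (Mu t) = \<phi> t (\<lambda>i. if i \<in> {1..n} then f t i (v (X i)) else 0))}"

end

theory Submission
  imports Defs
begin

definition cvx :: "('a \<Rightarrow> real) set \<Rightarrow> bool" where
  "cvx S \<longleftrightarrow> (\<forall>a\<in>S. \<forall>b\<in>S. \<forall>\<theta>::real. 0 \<le> \<theta> \<and> \<theta> \<le> 1 \<longrightarrow> (\<lambda>c. (1 - \<theta>) * a c + \<theta> * b c) \<in> S)"

lemma sum_split_add: "(\<Sum>l<a+b. f l) = (\<Sum>l<a. f l) + (\<Sum>l<b. f (a + l))" for f :: "nat \<Rightarrow> real"
  by (induction b) (simp_all add: add.assoc)

lemma conv_hullE:
  assumes "v \<in> conv_hull S"
  obtains k u w where "\<forall>l<(k::nat). u l \<ge> 0 \<and> w l \<in> S" "(\<Sum>l<k. u l) = 1" "v = (\<lambda>c. \<Sum>l<k. u l * w l c)"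
proof -
  from assms have "\<exists>k u w. (\<forall>l<(k::nat). u l \<ge> 0 \<and> w l \<in> S) \<and> (\<Sum>l<k. u l) = 1 \<and> v = (\<lambda>c. \<Sum>l<k. u l * w l c)"
    unfolding conv_hull_def mem_Collect_eq .
  then obtain k u w where "\<forall>l<(k::nat). u l \<ge> 0 \<and> w l \<in> S" "(\<Sum>l<k. u l) = 1" "v = (\<lambda>c. \<Sum>l<k. u l * w l c)"
    by iprover
  then show ?thesis by (rule that)
qed

lemma conv_hullI:
  assumes "\<forall>l<(k::nat). u l \<ge> 0 \<and> w l \<in> S" "(\<Sum>l<k. u l) = 1" "v = (\<lambda>c. \<Sum>l<k. u l * w l c)"
  shows "v \<in> conv_hull S"
  unfolding conv_hull_def mem_Collect_eq
  apply (rule exI[of _ k], rule exI[of _ u], rule exI[of _ w])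
  using assms by (intro conjI)

lemma conv_hull_sing: "x \<in> S \<Longrightarrow> x \<in> conv_hull S"
  by (rule conv_hullI[of 1 "\<lambda>_. 1" "\<lambda>_. x"]) auto

lemma conv_hull_mono: assumes "S \<subseteq> T" shows "conv_hull S \<subseteq> conv_hull T"
proof
  fix v assume "v \<in> conv_hull S"
  then obtain k u w where h: "\<forall>l<(k::nat). u l \<ge> 0 \<and> w l \<in> S" "(\<Sum>l<k. u l) = 1" "v = (\<lambda>c. \<Sum>l<k. u l * w l c)"
    by (rule conv_hullE)
  then show "v \<in> conv_hull T" using assms by (intro conv_hullI[of k u w]) auto
qed

lemma conv_hull_pos:
  assumes "\<forall>l<(k::nat). u l \<ge> 0" "(\<Sum>l<k. u l) = 1" "\<forall>l<k. u l > 0 \<longrightarrow> w l \<in> T"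
  shows "(\<lambda>c. \<Sum>l<k. u l * w l c) \<in> conv_hull T"
proof -
  have "\<exists>l0<k. u l0 > 0"
  proof (rule ccontr)
    assume "\<not> (\<exists>l0<k. u l0 > 0)"
    then have "\<forall>l<k. u l \<le> 0" by (metis not_less)
    with assms(1) have "\<forall>l<k. u l = 0" by (meson order.antisym)
    then have "(\<Sum>l<k. u l) = 0" by simp
    with assms(2) show False by simp
  qed
  then obtain l0 where l0: "l0 < k" "u l0 > 0" by blast
  define w' where "w' l = (if u l > 0 then w l else w l0)" for l
  have eq: "(\<lambda>c. \<Sum>l<k. u l * w l c) = (\<lambda>c. \<Sum>l<k. u l * w' l c)"
  proof (intro ext sum.cong refl)
    fix c l assume "l \<in> {..<k}"
    then have "u l \<ge> 0" using assms(1) by simp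
    then show "u l * w l c = u l * w' l c" by (cases "u l > 0") (auto simp: w'_def)
  qed
  have "\<forall>l<k. u l \<ge> 0 \<and> w' l \<in> T" using assms l0 by (auto simp: w'_def)
  then show ?thesis unfolding eq using assms(2) by (intro conv_hullI[of k u w']) auto
qed

lemma conv_hull_comb2:
  assumes a: "a \<in> conv_hull T" and b: "b \<in> conv_hull T" and th: "0 \<le> \<theta>" "\<theta> \<le> 1"
  shows "(\<lambda>c. (1 - \<theta>) * a c + \<theta> * b c) \<in> conv_hull T"
proof -
  obtain k1 u1 w1 where 1: "\<forall>l<(k1::nat). u1 l \<ge> 0 \<and> w1 l \<in> T" "(\<Sum>l<k1. u1 l) = 1" "a = (\<lambda>c. \<Sum>l<k1. u1 l * w1 l c)"
    using a by (rule conv_hullE)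
  obtain k2 u2 w2 where 2: "\<forall>l<(k2::nat). u2 l \<ge> 0 \<and> w2 l \<in> T" "(\<Sum>l<k2. u2 l) = 1" "b = (\<lambda>c. \<Sum>l<k2. u2 l * w2 l c)"
    using b by (rule conv_hullE)
  define u where "u l = (if l < k1 then (1 - \<theta>) * u1 l else \<theta> * u2 (l - k1))" for l
  define w where "w l = (if l < k1 then w1 l else w2 (l - k1))" for l
  have A: "\<forall>l<k1+k2. u l \<ge> 0 \<and> w l \<in> T"
  proof (intro allI impI)
    fix l assume "l < k1 + k2"
    then show "u l \<ge> 0 \<and> w l \<in> T"
      using 1(1) 2(1) th by (cases "l < k1") (simp_all add: u_def w_def)
  qed
  have B: "(\<Sum>l<k1+k2. u l) = 1"
    unfolding sum_split_add using 1(2) 2(2)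
    by (simp add: u_def sum_distrib_left[symmetric])
  have C: "(\<lambda>c. (1 - \<theta>) * a c + \<theta> * b c) = (\<lambda>c. \<Sum>l<k1+k2. u l * w l c)"
    unfolding sum_split_add 1(3) 2(3)
    by (simp add: u_def w_def sum_distrib_left mult.assoc)
  show ?thesis by (rule conv_hullI[OF A B C])
qed

lemma cvx_hull_sub:
  assumes "cvx S" "T \<subseteq> S"
  shows "conv_hull T \<subseteq> S"
proof
  fix v assume "v \<in> conv_hull T"
  then obtain k u w where h: "\<forall>l<(k::nat). u l \<ge> 0 \<and> w l \<in> T" "(\<Sum>l<k. u l) = 1" "v = (\<lambda>c. \<Sum>l<k. u l * w l c)"
    by (rule conv_hullE)
  have "\<forall>u w. (\<forall>l<k. u l \<ge> 0 \<and> w l \<in> T) \<and> (\<Sum>l<k. u l) = 1 \<longrightarrow> (\<lambda>c. \<Sum>l<k. u l * w l c) \<in> S"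
  proof (induction k)
    case 0 then show ?case by simp
  next
    case (Suc k)
    show ?case
    proof (intro allI impI)
      fix u :: "nat \<Rightarrow> real" and w assume H: "(\<forall>l<Suc k. u l \<ge> 0 \<and> w l \<in> T) \<and> (\<Sum>l<Suc k. u l) = 1"
      show "(\<lambda>c. \<Sum>l<Suc k. u l * w l c) \<in> S"
      proof (cases "u k = 1")
        case True
        then have "(\<Sum>l<k. u l) = 0" using H by simp
        then have z: "\<forall>l<k. u l = 0" using H by (subst (asm) sum_nonneg_eq_0_iff) auto
        have "(\<lambda>c. \<Sum>l<Suc k. u l * w l c) = w k" using z True by (simp add: ext)
        then show ?thesis using H assms(2) by auto
      next
        case False
        have uk: "0 \<le> u k" "u k < 1"
        proof -
          show "0 \<le> u k" using H by simp
          have "(\<Sum>l<k. u l) \<ge> 0" using H by (intro sum_nonneg) auto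
          then show "u k < 1" using H False by simp
        qed
        define s where "s = 1 - u k"
        have s: "s > 0" using uk s_def by simp
        define u' where "u' l = u l / s" for l
        have "(\<Sum>l<k. u' l) = 1" unfolding u'_def sum_divide_distrib[symmetric]
          using H s s_def by simp
        moreover have "\<forall>l<k. 0 \<le> u' l \<and> w l \<in> T" using H s by (auto simp: u'_def)
        ultimately have IH: "(\<lambda>c. \<Sum>l<k. u' l * w l c) \<in> S"
          using Suc.IH by blast
        have eq: "(\<lambda>c. \<Sum>l<Suc k. u l * w l c) = (\<lambda>c. (1 - u k) * (\<Sum>l<k. u' l * w l c) + u k * w k c)"
          using s by (auto simp: s_def u'_def sum_distrib_left intro!: ext)
        have "w k \<in> S" using H assms(2) by auto
        then show ?thesis unfolding eq using assms(1) IH uk unfolding cvx_def by auto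
      qed
    qed
  qed
  then show "v \<in> S" using h by blast
qed

lemma vertex_hull:
  assumes vx: "is_vertex v S" and cv: "cvx S" and TS: "T \<subseteq> S" and vh: "v \<in> conv_hull T"
  shows "v \<in> T"
proof -
  obtain k u w where h: "\<forall>l<(k::nat). u l \<ge> 0 \<and> w l \<in> T" "(\<Sum>l<k. u l) = 1" "v = (\<lambda>c. \<Sum>l<k. u l * w l c)"
    using vh by (rule conv_hullE)
  have "\<forall>u w. (\<forall>l<k. u l \<ge> 0 \<and> w l \<in> T) \<and> (\<Sum>l<k. u l) = 1 \<and> v = (\<lambda>c. \<Sum>l<k. u l * w l c) \<longrightarrow> v \<in> T"
  proof (induction k)
    case 0 then show ?case by simp
  next
    case (Suc k)
    show ?case
    proof (intro allI impI)
      fix u :: "nat \<Rightarrow> real" and w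
      assume H: "(\<forall>l<Suc k. u l \<ge> 0 \<and> w l \<in> T) \<and> (\<Sum>l<Suc k. u l) = 1 \<and> v = (\<lambda>c. \<Sum>l<Suc k. u l * w l c)"
      show "v \<in> T"
      proof (cases "u k = 1")
        case True
        then have "(\<Sum>l<k. u l) = 0" using H by simp
        then have z: "\<forall>l<k. u l = 0" using H by (subst (asm) sum_nonneg_eq_0_iff) auto
        have "v = w k" using z True H by (simp add: ext)
        then show ?thesis using H by auto
      next
        case False
        have uk: "0 \<le> u k" "u k < 1"
        proof -
          show "0 \<le> u k" using H by simp
          have "(\<Sum>l<k. u l) \<ge> 0" using H by (intro sum_nonneg) auto
          then show "u k < 1" using H False by simp
        qed
        define s where "s = 1 - u k"
        have s: "s > 0" using uk s_def by simp
        define u' where "u' l = u l / s" for l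
        define v' where "v' = (\<lambda>c. \<Sum>l<k. u' l * w l c)"
        have su: "(\<Sum>l<k. u' l) = 1" unfolding u'_def sum_divide_distrib[symmetric]
          using H s s_def by simp
        have nn: "\<forall>l<k. 0 \<le> u' l \<and> w l \<in> T" using H s by (auto simp: u'_def)
        have v'h: "v' \<in> conv_hull T" unfolding v'_def by (rule conv_hullI[OF nn su refl])
        then have v'S: "v' \<in> S" using cvx_hull_sub[OF cv TS] by blast
        have eq: "v = (\<lambda>c. (1 - u k) * v' c + u k * w k c)"
          using s H by (auto simp: s_def u'_def v'_def sum_distrib_left intro!: ext)
        have wkS: "w k \<in> S" using H TS by auto
        show ?thesis
        proof (cases "u k = 0")
          case True
          then have "v = v'" using eq by simp
          then show ?thesis using Suc.IH nn su v'_def by blast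
        next
          case False
          then have uk0: "0 < u k" using uk by simp
          have "v' = w k"
          proof (rule ccontr)
            assume "v' \<noteq> w k"
            then show False using vx v'S wkS uk0 uk(2) eq unfolding is_vertex_def by blast
          qed
          then have "v = w k" using eq by (simp add: algebra_simps)
          then show ?thesis using H by auto
        qed
      qed
    qed
  qed
  then show ?thesis using h by blast
qed

lemma poly_conv:
  assumes P: "polyhedron_in I S" and F: "finite F" and w: "\<forall>s\<in>F. w s \<ge> 0 \<and> q s \<in> S"
    and sw: "(\<Sum>s\<in>F. w s) = 1"
  shows "(\<lambda>c. \<Sum>s\<in>F. w s * q s c) \<in> S"
proof -
  obtain K a b where S: "S = {v. supp_in I v \<and> (\<forall>k<(K::nat). (\<Sum>c\<in>I. a k c * v c) \<ge> b k)}"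
    using P unfolding polyhedron_in_def by blast
  have "supp_in I (\<lambda>c. \<Sum>s\<in>F. w s * q s c)"
    using w unfolding S supp_in_def by auto
  moreover have "(\<Sum>c\<in>I. a k c * (\<Sum>s\<in>F. w s * q s c)) \<ge> b k" if "k < K" for k
  proof -
    have "(\<Sum>c\<in>I. a k c * (\<Sum>s\<in>F. w s * q s c)) = (\<Sum>s\<in>F. w s * (\<Sum>c\<in>I. a k c * q s c))"
      by (simp add: sum_distrib_left sum.swap[of _ I F] algebra_simps)
    also have "\<dots> \<ge> (\<Sum>s\<in>F. w s * b k)"
      using w that unfolding S by (intro sum_mono mult_left_mono) auto
    also have "(\<Sum>s\<in>F. w s * b k) = b k" using sw by (simp add: sum_distrib_right[symmetric])
    finally show ?thesis .
  qed
  ultimately show ?thesis unfolding S by blast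
qed

lemma poly_cvx:
  assumes P: "polyhedron_in I S"
  shows "cvx S"
  unfolding cvx_def
proof (intro ballI allI impI)
  fix x y and \<theta> :: real assume x: "x \<in> S" and y: "y \<in> S" and th: "0 \<le> \<theta> \<and> \<theta> \<le> 1"
  define q where "q s = (if s = (0::nat) then x else y)" for s
  define w where "w s = (if s = (0::nat) then 1 - \<theta> else \<theta>)" for s
  have "(\<lambda>c. \<Sum>s\<in>{0,1}. w s * q s c) \<in> S"
    using x y th by (intro poly_conv[OF P]) (auto simp: q_def w_def)
  then show "(\<lambda>c. (1 - \<theta>) * x c + \<theta> * y c) \<in> S" by (simp add: q_def w_def)
qed


lemma lin_comb1: "(\<Sum>c\<in>I. a c * (x c + t * y c)) = (\<Sum>c\<in>I. a c * x c) + t * (\<Sum>c\<in>I. a c * y c)"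
  for a x y :: "'a \<Rightarrow> real"
  by (simp add: sum.distrib sum_distrib_left algebra_simps)

lemma lin_comb2: "(\<Sum>c\<in>I. a c * ((1 - \<theta>) * x c + \<theta> * y c)) = (1 - \<theta>) * (\<Sum>c\<in>I. a c * x c) + \<theta> * (\<Sum>c\<in>I. a c * y c)"
  for a x y :: "'a \<Rightarrow> real"
proof -
  have "(\<Sum>c\<in>I. a c * ((1 - \<theta>) * x c + \<theta> * y c)) = (\<Sum>c\<in>I. (1 - \<theta>) * (a c * x c) + \<theta> * (a c * y c))"
    by (intro sum.cong refl) (simp add: algebra_simps)
  also have "\<dots> = (1 - \<theta>) * (\<Sum>c\<in>I. a c * x c) + \<theta> * (\<Sum>c\<in>I. a c * y c)"
    by (simp add: sum.distrib sum_distrib_left)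
  finally show ?thesis .
qed

lemma km_step:
  fixes a :: "nat \<Rightarrow> 'a \<Rightarrow> real" and b :: "nat \<Rightarrow> real"
  assumes S: "S = {v. supp_in I v \<and> (\<forall>k<K. (\<Sum>c\<in>I. a k c * v c) \<ge> b k)}"
    and bd: "\<forall>v\<in>S. \<forall>c. \<bar>v c\<bar> \<le> B" and p: "p \<in> S" and ws: "supp_in I w" and wnz: "w c0 \<noteq> 0"
    and tight: "\<forall>k<K. (\<Sum>c\<in>I. a k c * p c) = b k \<longrightarrow> (\<Sum>c\<in>I. a k c * w c) = 0"
  shows "\<exists>t>0. (\<lambda>c. p c + t * w c) \<in> S \<and>
    card {k. k<K \<and> (\<Sum>c\<in>I. a k c * (p c + t * w c)) > b k} < card {k. k<K \<and> (\<Sum>c\<in>I. a k c * p c) > b k}"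
proof -
  define Ap where "Ap k = (\<Sum>c\<in>I. a k c * p c)" for k
  define Aw where "Aw k = (\<Sum>c\<in>I. a k c * w c)" for k
  have lin: "(\<Sum>c\<in>I. a k c * (p c + t * w c)) = Ap k + t * Aw k" for k t
    unfolding Ap_def Aw_def by (rule lin_comb1)
  have pS: "supp_in I p" "\<forall>k<K. Ap k \<ge> b k" using p unfolding S Ap_def by auto
  have inS: "(\<lambda>c. p c + t * w c) \<in> S \<longleftrightarrow> (\<forall>k<K. Ap k + t * Aw k \<ge> b k)" for t
  proof -
    have "supp_in I (\<lambda>c. p c + t * w c)" using pS(1) ws unfolding supp_in_def by simp
    then show ?thesis unfolding S using lin by simp
  qed
  define Kn where "Kn = {k. k < K \<and> Aw k < 0}"
  have finKn: "finite Kn" unfolding Kn_def by simp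
  have Knne: "Kn \<noteq> {}"
  proof
    assume e: "Kn = {}"
    define t0 where "t0 = (\<bar>B\<bar> + \<bar>p c0\<bar> + 1) / \<bar>w c0\<bar>"
    have t0: "t0 \<ge> 0" unfolding t0_def by simp
    have "\<forall>k<K. Ap k + t0 * Aw k \<ge> b k"
    proof (intro allI impI)
      fix k assume k: "k < K"
      then have "Aw k \<ge> 0" using e unfolding Kn_def by auto
      then have "t0 * Aw k \<ge> 0" using t0 by simp
      then show "Ap k + t0 * Aw k \<ge> b k" using pS(2) k by smt
    qed
    then have "(\<lambda>c. p c + t0 * w c) \<in> S" using inS by blast
    then have "\<bar>p c0 + t0 * w c0\<bar> \<le> B" using bd by auto
    moreover have "t0 * \<bar>w c0\<bar> = \<bar>B\<bar> + \<bar>p c0\<bar> + 1" unfolding t0_def using wnz by simp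
    moreover have "\<bar>t0 * w c0\<bar> = t0 * \<bar>w c0\<bar>" using t0 by (simp add: abs_mult)
    ultimately show False by linarith
  qed
  define rat where "rat k = (Ap k - b k) / (- Aw k)" for k
  define t where "t = Min (rat ` Kn)"
  have "t \<in> rat ` Kn" using Min_in[of "rat ` Kn"] finKn Knne unfolding t_def by blast
  then obtain ks where ks: "ks \<in> Kn" "t = rat ks" by blast
  have tle: "t \<le> rat k" if "k \<in> Kn" for k unfolding t_def using finKn that by simp
  have strict: "Ap k > b k" if "k \<in> Kn" for k
  proof -
    have "k < K" "Aw k < 0" using that unfolding Kn_def by auto
    have "Ap k \<ge> b k" using pS(2) \<open>k < K\<close> by simp
    moreover have "Ap k \<noteq> b k" using tight \<open>k < K\<close> \<open>Aw k < 0\<close> unfolding Ap_def Aw_def by auto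
    ultimately show ?thesis by simp
  qed
  have tpos: "t > 0" using ks strict[of ks] unfolding rat_def Kn_def by (auto simp: divide_pos_neg)
  have cons: "\<forall>k<K. Ap k + t * Aw k \<ge> b k"
  proof (intro allI impI)
    fix k assume k: "k < K"
    show "Ap k + t * Aw k \<ge> b k"
    proof (cases "Aw k < 0")
      case True
      then have "k \<in> Kn" using k unfolding Kn_def by simp
      then have "t \<le> (Ap k - b k) / (- Aw k)" using tle rat_def by simp
      moreover have "0 < - Aw k" using True by simp
      ultimately have "t * (- Aw k) \<le> Ap k - b k" using pos_le_divide_eq by blast
      then show ?thesis by simp
    next
      case False
      then have "t * Aw k \<ge> 0" using tpos by simp
      then show ?thesis using pS(2) k by smt
    qed
  qed
  have ksK: "ks < K" "Aw ks < 0" using ks(1) unfolding Kn_def by auto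
  have kstight: "Ap ks + t * Aw ks = b ks"
    using ks(2) ksK(2) unfolding rat_def by (simp add: field_simps)
  have sub: "{k. k<K \<and> Ap k + t * Aw k > b k} \<subset> {k. k<K \<and> Ap k > b k}"
  proof
    show "{k. k<K \<and> Ap k + t * Aw k > b k} \<subseteq> {k. k<K \<and> Ap k > b k}"
    proof safe
      fix k assume k: "k < K" "Ap k + t * Aw k > b k"
      show "Ap k > b k"
      proof (rule ccontr)
        assume "\<not> Ap k > b k"
        then have "Ap k = b k" using pS(2) k by force
        then have "Aw k = 0" using tight k unfolding Ap_def Aw_def by blast
        then show False using k \<open>Ap k = b k\<close> by simp
      qed
    qed
    show "{k. k<K \<and> Ap k + t * Aw k > b k} \<noteq> {k. k<K \<and> Ap k > b k}"
    proof
      assume "{k. k<K \<and> Ap k + t * Aw k > b k} = {k. k<K \<and> Ap k > b k}"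
      moreover have "ks \<in> {k. k<K \<and> Ap k > b k}" using ksK strict[OF ks(1)] by simp
      ultimately have "ks \<in> {k. k<K \<and> Ap k + t * Aw k > b k}" by simp
      then show False using kstight by simp
    qed
  qed
  have "card {k. k<K \<and> Ap k + t * Aw k > b k} < card {k. k<K \<and> Ap k > b k}"
    by (rule psubset_card_mono[OF _ sub]) simp
  moreover have "(\<lambda>c. p c + t * w c) \<in> S" using cons inS by blast
  ultimately show ?thesis using tpos unfolding lin Ap_def by blast
qed


lemma KM:
  assumes P: "polytope_in I S" and p: "p \<in> S"
  shows "p \<in> conv_hull {q. is_vertex q S}"
proof -
  obtain K a b where S: "S = {v. supp_in I v \<and> (\<forall>k<(K::nat). (\<Sum>c\<in>I. a k c * v c) \<ge> b k)}"
    using P unfolding polytope_in_def polyhedron_in_def by blast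
  obtain B where bd: "\<forall>v\<in>S. \<forall>c. \<bar>v c\<bar> \<le> B" using P unfolding polytope_in_def by blast
  define N where "N v = card {k. k<K \<and> (\<Sum>c\<in>I. a k c * v c) > b k}" for v
  define V where "V = {q. is_vertex q S}"
  have "\<forall>p. p \<in> S \<and> N p = n \<longrightarrow> p \<in> conv_hull V" for n
  proof (induction n rule: less_induct)
    case (less n)
    show ?case
    proof (intro allI impI)
      fix p assume pn: "p \<in> S \<and> N p = n"
      show "p \<in> conv_hull V"
      proof (cases "is_vertex p S")
        case True
        then show ?thesis unfolding V_def by (intro conv_hull_sing) simp
      next
        case False
        then obtain x y \<theta> where xy: "x \<in> S" "y \<in> S" "x \<noteq> y" "0 < \<theta>" "\<theta> < 1"
          "p = (\<lambda>c. (1 - \<theta>) * x c + \<theta> * y c)"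
          using pn unfolding is_vertex_def by blast
        define w where "w c = y c - x c" for c
        obtain c0 where c0: "x c0 \<noteq> y c0" using xy(3) by blast
        have wnz: "w c0 \<noteq> 0" "(\<lambda>c. - w c) c0 \<noteq> 0" using c0 unfolding w_def by auto
        have ws: "supp_in I w" "supp_in I (\<lambda>c. - w c)"
          using xy(1,2) unfolding S supp_in_def w_def by auto
        have tight: "\<forall>k<K. (\<Sum>c\<in>I. a k c * p c) = b k \<longrightarrow> (\<Sum>c\<in>I. a k c * w c) = 0"
        proof (intro allI impI)
          fix k assume k: "k < K" and tk: "(\<Sum>c\<in>I. a k c * p c) = b k"
          have hx: "(\<Sum>c\<in>I. a k c * x c) \<ge> b k" using xy(1) k unfolding S by simp
          have hy: "(\<Sum>c\<in>I. a k c * y c) \<ge> b k" using xy(2) k unfolding S by simp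
          have "(1 - \<theta>) * (\<Sum>c\<in>I. a k c * x c) + \<theta> * (\<Sum>c\<in>I. a k c * y c) = b k"
            using tk unfolding xy(6) lin_comb2 .
          then have e1: "(1 - \<theta>) * ((\<Sum>c\<in>I. a k c * x c) - b k) + \<theta> * ((\<Sum>c\<in>I. a k c * y c) - b k) = 0"
            by (simp add: algebra_simps)
          have n1: "(1 - \<theta>) * ((\<Sum>c\<in>I. a k c * x c) - b k) \<ge> 0" using hx xy(5) by simp
          have n2: "\<theta> * ((\<Sum>c\<in>I. a k c * y c) - b k) \<ge> 0" using hy xy(4) by simp
          have "(1 - \<theta>) * ((\<Sum>c\<in>I. a k c * x c) - b k) = 0" using e1 n1 n2 by linarith
          then have ex: "(\<Sum>c\<in>I. a k c * x c) = b k" using xy(5) by simp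
          have "\<theta> * ((\<Sum>c\<in>I. a k c * y c) - b k) = 0" using e1 n1 n2 by linarith
          then have ey: "(\<Sum>c\<in>I. a k c * y c) = b k" using xy(4) by simp
          have "(\<Sum>c\<in>I. a k c * w c) = (\<Sum>c\<in>I. a k c * y c) - (\<Sum>c\<in>I. a k c * x c)"
            unfolding w_def by (simp add: algebra_simps sum_subtractf)
          then show "(\<Sum>c\<in>I. a k c * w c) = 0" using ex ey by simp
        qed
        have tight2: "\<forall>k<K. (\<Sum>c\<in>I. a k c * p c) = b k \<longrightarrow> (\<Sum>c\<in>I. a k c * (- w c)) = 0"
          using tight by (simp add: sum_negf)
        obtain t1 where t1: "t1 > 0" "(\<lambda>c. p c + t1 * w c) \<in> S"
          "N (\<lambda>c. p c + t1 * w c) < N p"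
          using km_step[OF S bd _ ws(1) wnz(1) tight] pn unfolding N_def by auto
        obtain t2 where t2: "t2 > 0" "(\<lambda>c. p c + t2 * (- w c)) \<in> S"
          "N (\<lambda>c. p c + t2 * (- w c)) < N p"
          using km_step[OF S bd _ ws(2) wnz(2) tight2] pn unfolding N_def by auto
        have h1: "(\<lambda>c. p c + t1 * w c) \<in> conv_hull V" using less.IH t1 pn by blast
        have h2: "(\<lambda>c. p c + t2 * (- w c)) \<in> conv_hull V" using less.IH t2 pn by blast
        define th where "th = t1 / (t1 + t2)"
        have th: "0 \<le> th" "th \<le> 1" using t1(1) t2(1) unfolding th_def by auto
        have eq: "p = (\<lambda>c. (1 - th) * (p c + t1 * w c) + th * (p c + t2 * (- w c)))"
        proof
          fix c
          have e1: "1 - th = t2 / (t1 + t2)" unfolding th_def using t1(1) t2(1) by (simp add: field_simps)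
          have k0: "(1 - th) * t1 - th * t2 = 0" unfolding e1 unfolding th_def by simp
          have "(1 - th) * (p c + t1 * w c) + th * (p c + t2 * (- w c)) = p c + ((1 - th) * t1 - th * t2) * w c"
            by (simp add: algebra_simps)
          then show "p c = (1 - th) * (p c + t1 * w c) + th * (p c + t2 * (- w c))"
            using k0 by simp
        qed
        show ?thesis by (subst eq, rule conv_hull_comb2[OF h1 h2 th])
      qed
    qed
  qed
  then show ?thesis using p unfolding V_def by blast
qed

definition stepv :: "nat \<Rightarrow> nat \<Rightarrow> real" where
  "stepv k = (\<lambda>j. if 1 \<le> j \<and> j \<le> k then 1 else 0)"

lemma stepv_vert: "k \<le> d \<Longrightarrow> stepv k \<in> vert_simplex d"
  unfolding vert_simplex_def Delta_simplex_def supp_in_def stepv_def by auto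

lemma delta_mono:
  assumes z: "z \<in> Delta_simplex d" and ij: "1 \<le> i" "i \<le> j" "j \<le> d"
  shows "z j \<le> z i"
  using ij
proof (induction j)
  case 0 then show ?case by simp
next
  case (Suc j)
  show ?case
  proof (cases "i = Suc j")
    case True then show ?thesis by simp
  next
    case False
    then have "i \<le> j" "1 \<le> j" "j < d" using Suc.prems by auto
    then have "z (Suc j) \<le> z j" using z unfolding Delta_simplex_def by auto
    then show ?thesis using Suc.IH \<open>i \<le> j\<close> Suc.prems by simp
  qed
qed

lemma delta_bounds:
  assumes z: "z \<in> Delta_simplex d"
  shows "0 \<le> z j \<and> z j \<le> 1"
proof (cases "1 \<le> j \<and> j \<le> d")
  case True
  have "z j \<le> z 1" using delta_mono[OF z, of 1 j] True by simp
  moreover have "z d \<le> z j" using delta_mono[OF z, of j d] True by simp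
  moreover have "z 1 \<le> 1" "z d \<ge> 0" using z True unfolding Delta_simplex_def by auto
  ultimately show ?thesis by simp
next
  case False
  then have "z j = 0" using z unfolding Delta_simplex_def supp_in_def by auto
  then show ?thesis by simp
qed

lemma vert_stepv:
  assumes z: "z \<in> vert_simplex d"
  shows "\<exists>k\<le>d. z = stepv k"
proof -
  have zD: "z \<in> Delta_simplex d" and zb: "\<forall>j\<in>{1..d}. z j \<in> {0,1}" using z unfolding vert_simplex_def by auto
  define k where "k = Max (insert 0 {j\<in>{1..d}. z j = 1})"
  have fin: "finite (insert 0 {j\<in>{1..d}. z j = 1})" by simp
  have kd: "k \<le> d" unfolding k_def using fin by (subst Max_le_iff) auto
  have kin: "k \<in> insert 0 {j\<in>{1..d}. z j = 1}" unfolding k_def using fin by (intro Max_in) auto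
  have "z j = stepv k j" for j
  proof (cases "1 \<le> j \<and> j \<le> d")
    case True
    show ?thesis
    proof (cases "j \<le> k")
      case jk: True
      then have "k \<noteq> 0" using True by auto
      then have "z k = 1" "1 \<le> k" using kin by auto
      then have "z k \<le> z j" using delta_mono[OF zD, of j k] True jk kd by simp
      moreover have "z j \<le> 1" using delta_bounds[OF zD] by simp
      ultimately show ?thesis using \<open>z k = 1\<close> True jk unfolding stepv_def by simp
    next
      case jk: False
      have "z j \<noteq> 1"
      proof
        assume "z j = 1"
        then have "j \<le> k" unfolding k_def using fin True by (intro Max_ge) auto
        then show False using jk by simp
      qed
      then show ?thesis using zb True jk unfolding stepv_def by auto
    qed
  next
    case False
    then have "z j = 0" using zD unfolding Delta_simplex_def supp_in_def by auto
    then show ?thesis using False kd unfolding stepv_def by auto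
  qed
  then show ?thesis using kd by auto
qed

lemma tele: "(\<Sum>j\<in>{1..k}. (g j - g (j - 1))) = g k - g 0" for g :: "nat \<Rightarrow> real"
  by (induction k) (simp_all add: atLeastAtMostSuc_conv)

lemma tele_stepv:
  fixes g :: "nat \<Rightarrow> real"
  assumes "k \<le> d"
  shows "(\<Sum>j\<in>{1..d}. (g j - g (j - 1)) * stepv k j) = g k - g 0"
proof -
  have "(\<Sum>j\<in>{1..d}. (g j - g (j - 1)) * stepv k j) = (\<Sum>j\<in>{1..k}. (g j - g (j - 1)))"
    using assms by (intro sum.mono_neutral_cong_right) (auto simp: stepv_def)
  then show ?thesis using tele by simp
qed

lemma bin_force:
  fixes u x :: "nat \<Rightarrow> real"
  assumes h: "\<forall>l<k. u l \<ge> 0 \<and> 0 \<le> x l \<and> x l \<le> 1" and s: "(\<Sum>l<k. u l) = 1"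
    and b: "(\<Sum>l<k. u l * x l) \<in> {0,1}" and l: "l < k" "u l > 0"
  shows "x l = (\<Sum>l<k. u l * x l)"
proof (cases "(\<Sum>l<k. u l * x l) = 0")
  case True
  have z: "\<forall>l\<in>{..<k}. u l * x l = 0"
    using True h by (subst sum_nonneg_eq_0_iff[symmetric]) auto
  have "l \<in> {..<k}" using l by simp
  then have "u l * x l = 0" using z by blast
  then show ?thesis using l True by simp
next
  case False
  then have one: "(\<Sum>l<k. u l * x l) = 1" using b by auto
  have "(\<Sum>l<k. u l * (1 - x l)) = (\<Sum>l<k. u l) - (\<Sum>l<k. u l * x l)"
    by (simp add: algebra_simps sum_subtractf)
  then have "(\<Sum>l<k. u l * (1 - x l)) = 0" using s one by simp
  then have z: "\<forall>l\<in>{..<k}. u l * (1 - x l) = 0"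
    using h by (subst sum_nonneg_eq_0_iff[symmetric]) auto
  have "l \<in> {..<k}" using l by simp
  then have "u l * (1 - x l) = 0" using z by blast
  then show ?thesis using l one by simp
qed


lemma conv_G_bin:
  assumes u: "u \<in> conv_hull (Gset n m d p f \<phi>)"
    and zb: "\<forall>i\<in>{1..n}. zvec u i \<in> vert_simplex (d i)"
  shows "u \<in> Gset n m d p f \<phi>"
proof -
  obtain k lam g where h: "\<forall>l<(k::nat). lam l \<ge> 0 \<and> g l \<in> Gset n m d p f \<phi>" "(\<Sum>l<k. lam l) = 1"
    "u = (\<lambda>c. \<Sum>l<k. lam l * g l c)"
    using u by (rule conv_hullE)
  have uc: "u c = (\<Sum>l<k. lam l * g l c)" for c using h(3) by simp
  have gsupp: "\<forall>l<k. supp_in (IZ n d \<union> IM m) (g l)" using h(1) unfolding Gset_def by auto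
  have gz: "\<forall>l<k. \<forall>i\<in>{1..n}. zvec (g l) i \<in> vert_simplex (d i)" using h(1) unfolding Gset_def by auto
  have zeq: "g l (Z i j) = u (Z i j)" if l: "l < k" "lam l > 0" for l i j
  proof (cases "i \<in> {1..n} \<and> j \<in> {1..d i}")
    case True
    have A: "\<forall>l<k. lam l \<ge> 0 \<and> 0 \<le> g l (Z i j) \<and> g l (Z i j) \<le> 1"
    proof (intro allI impI)
      fix l assume "l < k"
      then have "zvec (g l) i \<in> Delta_simplex (d i)" using gz True unfolding vert_simplex_def by auto
      then have "0 \<le> g l (Z i j) \<and> g l (Z i j) \<le> 1" using delta_bounds unfolding zvec_def by metis
      then show "lam l \<ge> 0 \<and> 0 \<le> g l (Z i j) \<and> g l (Z i j) \<le> 1" using h(1) \<open>l < k\<close> by simp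
    qed
    have "u (Z i j) \<in> {0,1}" using zb True unfolding vert_simplex_def zvec_def by auto
    then have B: "(\<Sum>l<k. lam l * g l (Z i j)) \<in> {0,1}" using uc by simp
    show ?thesis using bin_force[OF A h(2) B l] uc[of "Z i j"] by simp
  next
    case False
    then have nz: "Z i j \<notin> IZ n d \<union> IM m" unfolding IZ_def IM_def by auto
    then have "\<forall>l<k. g l (Z i j) = 0" using gsupp unfolding supp_in_def by blast
    then show ?thesis using l uc[of "Z i j"] by simp
  qed
  have zveq: "zvec (g l) i = zvec u i" if "l < k" "lam l > 0" for l i
    unfolding zvec_def using zeq[OF that] by auto
  have "supp_in (IZ n d \<union> IM m) u"
    unfolding supp_in_def uc using gsupp unfolding supp_in_def by simp
  moreover have "u (Mu t) = \<phi> t (\<lambda>i. if i \<in> {1..n} then ell d p f t i (zvec u i) else 0)"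
    if t: "t \<in> {1..m}" for t
  proof -
    define Phi where "Phi = \<phi> t (\<lambda>i. if i \<in> {1..n} then ell d p f t i (zvec u i) else 0)"
    have "lam l * g l (Mu t) = lam l * Phi" if l: "l < k" for l
    proof (cases "lam l > 0")
      case True
      have "g l (Mu t) = \<phi> t (\<lambda>i. if i \<in> {1..n} then ell d p f t i (zvec (g l) i) else 0)"
        using h(1) l t unfolding Gset_def by auto
      moreover have zz: "zvec (g l) = zvec u" using zveq[OF l True] by (rule ext)
      ultimately have "g l (Mu t) = Phi" unfolding Phi_def by (metis zz)
      then show ?thesis by simp
    next
      case False
      moreover have "lam l \<ge> 0" using h(1) l by simp
      ultimately have "lam l = 0" by simp
      then show ?thesis by simp
    qed
    then have "u (Mu t) = (\<Sum>l<k. lam l * Phi)" unfolding uc by (intro sum.cong) auto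
    also have "\<dots> = Phi" using h(2) by (simp add: sum_distrib_right[symmetric])
    finally show ?thesis unfolding Phi_def .
  qed
  ultimately show ?thesis unfolding Gset_def using zb by blast
qed

lemma mem_simps [simp]:
  "X i \<in> IX n \<longleftrightarrow> i \<in> {1..n}" "Z i j \<notin> IX n" "Mu t \<notin> IX n" "Dl i k \<notin> IX n"
  "Z i j \<in> IZ n d \<longleftrightarrow> i \<in> {1..n} \<and> j \<in> {1..d i}" "X i \<notin> IZ n d" "Mu t \<notin> IZ n d" "Dl i k \<notin> IZ n d"
  "Mu t \<in> IM m \<longleftrightarrow> t \<in> {1..m}" "X i \<notin> IM m" "Z i j \<notin> IM m" "Dl i k \<notin> IM m"
  "Dl i k \<in> ID n r \<longleftrightarrow> i \<in> {1..n} \<and> k \<in> {1..r i}" "X i \<notin> ID n r" "Z i j \<notin> ID n r" "Mu t \<notin> ID n r"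
  unfolding IX_def IZ_def IM_def ID_def by auto

lemma restr_ZM:
  assumes "supp_in (IX n \<union> IZ n d \<union> IM m \<union> ID n r) v"
  shows "restr (IZ n d \<union> IM m) v (Z i j) = v (Z i j)" "restr (IZ n d \<union> IM m) v (Mu t) = v (Mu t)"
  using assms unfolding restr_def supp_in_def by auto

lemma zvec_restr:
  assumes "supp_in (IX n \<union> IZ n d \<union> IM m \<union> ID n r) v"
  shows "zvec (restr (IZ n d \<union> IM m) v) i = zvec v i"
  unfolding zvec_def using restr_ZM[OF assms] by simp

lemma Eset_zvert:
  assumes H9: "\<forall>i\<in>{1..n}. (\<lambda>q j. q (Inl j)) ` (Q i \<inter> {q. \<forall>k\<in>{1..r i}. q (Inr k) \<in> {0, 1}}) = vert_simplex (d i)"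
    and v: "v \<in> Eset n m d p r f \<phi> P Q" and i: "i \<in> {1..n}"
  shows "zvec v i \<in> vert_simplex (d i)"
proof -
  have q: "zdvec v i \<in> Q i" using v i unfolding Eset_def Erel_def by auto
  have "\<forall>k\<in>{1..r i}. zdvec v i (Inr k) \<in> {0,1}"
    using v i unfolding Eset_def zdvec_def by auto
  then have "(\<lambda>q j. q (Inl j)) (zdvec v i) \<in> vert_simplex (d i)" using H9 i q by blast
  moreover have "(\<lambda>q j. q (Inl j)) (zdvec v i) = zvec v i" unfolding zdvec_def zvec_def by simp
  ultimately show ?thesis by simp
qed

lemma Erel_supp: "v \<in> Erel n m d p r f \<phi> P Q \<Longrightarrow> supp_in (IX n \<union> IZ n d \<union> IM m \<union> ID n r) v"
  unfolding Erel_def by simp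

lemma Eset_G:
  assumes H9: "\<forall>i\<in>{1..n}. (\<lambda>q j. q (Inl j)) ` (Q i \<inter> {q. \<forall>k\<in>{1..r i}. q (Inr k) \<in> {0, 1}}) = vert_simplex (d i)"
    and v: "v \<in> Eset n m d p r f \<phi> P Q"
  shows "restr (IZ n d \<union> IM m) v \<in> Gset n m d p f \<phi>"
proof -
  have s: "supp_in (IX n \<union> IZ n d \<union> IM m \<union> ID n r) v" using v Erel_supp unfolding Eset_def by blast
  show ?thesis
  proof (rule conv_G_bin)
    show "restr (IZ n d \<union> IM m) v \<in> conv_hull (Gset n m d p f \<phi>)" using v unfolding Eset_def Erel_def by auto
    show "\<forall>i\<in>{1..n}. zvec (restr (IZ n d \<union> IM m) v) i \<in> vert_simplex (d i)"
      using Eset_zvert[OF H9 v] zvec_restr[OF s] by simp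
  qed
qed

lemma Eset_mu:
  assumes H9: "\<forall>i\<in>{1..n}. (\<lambda>q j. q (Inl j)) ` (Q i \<inter> {q. \<forall>k\<in>{1..r i}. q (Inr k) \<in> {0, 1}}) = vert_simplex (d i)"
    and v: "v \<in> Eset n m d p r f \<phi> P Q" and t: "t \<in> {1..m}"
  shows "v (Mu t) = \<phi> t (\<lambda>i. if i \<in> {1..n} then ell d p f t i (zvec v i) else 0)"
proof -
  have s: "supp_in (IX n \<union> IZ n d \<union> IM m \<union> ID n r) v" using v Erel_supp unfolding Eset_def by blast
  have "restr (IZ n d \<union> IM m) v (Mu t) = \<phi> t (\<lambda>i. if i \<in> {1..n} then ell d p f t i (zvec (restr (IZ n d \<union> IM m) v) i) else 0)"
    using Eset_G[OF H9 v] t unfolding Gset_def by blast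
  then show ?thesis unfolding zvec_restr[OF s] restr_ZM[OF s] .
qed

lemma Erel_x:
  assumes v: "v \<in> Erel n m d p r f \<phi> P Q" and i: "i \<in> {1..n}"
  shows "v (X i) = p i 0 + (\<Sum>j\<in>{1..d i}. (p i j - p i (j - 1)) * zvec v i j)"
  using v i unfolding Erel_def Bset_def by auto

lemma x_stepv:
  assumes "k \<le> d i"
  shows "p i 0 + (\<Sum>j\<in>{1..d i}. (p i j - p i (j - 1)) * stepv k j) = p i k"
  using tele_stepv[OF assms, of "p i"] by simp

lemma ell_stepv:
  assumes "k \<le> d i"
  shows "ell d p f t i (stepv k) = f t i (p i k)"
  unfolding ell_def using tele_stepv[OF assms, of "\<lambda>j. f t i (p i j)"] by simp


lemma img_sub:
  assumes H9: "\<forall>i\<in>{1..n}. (\<lambda>q j. q (Inl j)) ` (Q i \<inter> {q. \<forall>k\<in>{1..r i}. q (Inr k) \<in> {0, 1}}) = vert_simplex (d i)"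
    and v: "v \<in> Eset n m d p r f \<phi> P Q"
  shows "restr (IX n \<union> IM m) v \<in> Target n m d p f \<phi> P"
proof -
  have vE: "v \<in> Erel n m d p r f \<phi> P Q" using v unfolding Eset_def by simp
  have s: "supp_in (IX n \<union> IZ n d \<union> IM m \<union> ID n r) v" using Erel_supp[OF vE] .
  define w where "w = restr (IX n \<union> IM m) v"
  have wX: "w (X i) = v (X i)" for i
    using s unfolding w_def restr_def supp_in_def by auto
  have wM: "w (Mu t) = v (Mu t)" for t
    using s unfolding w_def restr_def supp_in_def by auto
  have xP: "(\<lambda>i. v (X i)) \<in> P" using vE unfolding Erel_def by simp
  have kex: "\<exists>k\<le>d i. zvec v i = stepv k \<and> v (X i) = p i k" if i: "i \<in> {1..n}" for i
  proof -
    obtain k where k: "k \<le> d i" "zvec v i = stepv k" using vert_stepv[OF Eset_zvert[OF H9 v i]] by blast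
    have "v (X i) = p i k" using Erel_x[OF vE i] k x_stepv[of k d i p, OF k(1)] by simp
    then show ?thesis using k by blast
  qed
  have "supp_in (IX n \<union> IM m) w" unfolding w_def restr_def supp_in_def by simp
  moreover have "(\<lambda>i. w (X i)) \<in> P" using xP wX by simp
  moreover have "\<forall>i\<in>{1..n}. w (X i) \<in> p i ` {0..d i}"
    using kex wX by fastforce
  moreover have "\<forall>t\<in>{1..m}. w (Mu t) = \<phi> t (\<lambda>i. if i \<in> {1..n} then f t i (w (X i)) else 0)"
  proof
    fix t assume t: "t \<in> {1..m}"
    have "(\<lambda>i. if i \<in> {1..n} then ell d p f t i (zvec v i) else 0) = (\<lambda>i. if i \<in> {1..n} then f t i (w (X i)) else 0)"
    proof
      fix i show "(if i \<in> {1..n} then ell d p f t i (zvec v i) else 0) = (if i \<in> {1..n} then f t i (w (X i)) else 0)"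
      proof (cases "i \<in> {1..n}")
        case True
        then obtain k where k: "k \<le> d i" "zvec v i = stepv k" "v (X i) = p i k" using kex by blast
        then show ?thesis using True ell_stepv[of k d i p f t, OF k(1)] wX by simp
      qed auto
    qed
    then show "w (Mu t) = \<phi> t (\<lambda>i. if i \<in> {1..n} then f t i (w (X i)) else 0)"
      using Eset_mu[OF H9 v t] wM by simp
  qed
  ultimately show ?thesis unfolding Target_def w_def by blast
qed

lemma Q_supp:
  assumes HQ: "polytope_in (Inl ` {1..d} \<union> Inr ` {1..r}) Q" and q: "q \<in> Q"
  shows "supp_in (Inl ` {1..d} \<union> Inr ` {1..r}) q"
  using HQ q unfolding polytope_in_def polyhedron_in_def by auto

lemma img_sup:
  assumes H9: "\<forall>i\<in>{1..n}. (\<lambda>q j. q (Inl j)) ` (Q i \<inter> {q. \<forall>k\<in>{1..r i}. q (Inr k) \<in> {0, 1}}) = vert_simplex (d i)"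
    and HQ: "\<forall>i\<in>{1..n}. polytope_in (Inl ` {1..d i} \<union> Inr ` {1..r i}) (Q i)"
    and v: "v \<in> Target n m d p f \<phi> P"
  shows "v \<in> restr (IX n \<union> IM m) ` Eset n m d p r f \<phi> P Q"
proof -
  have vs: "supp_in (IX n \<union> IM m) v" and vP: "(\<lambda>i. v (X i)) \<in> P"
    and vx: "\<forall>i\<in>{1..n}. v (X i) \<in> p i ` {0..d i}"
    and vm: "\<forall>t\<in>{1..m}. v (Mu t) = \<phi> t (\<lambda>i. if i \<in> {1..n} then f t i (v (X i)) else 0)"
    using v unfolding Target_def by auto
  have "\<forall>i\<in>{1..n}. \<exists>kq. fst kq \<le> d i \<and> v (X i) = p i (fst kq) \<and> snd kq \<in> Q i \<and>
      (\<forall>kk\<in>{1..r i}. snd kq (Inr kk) \<in> {0,1}) \<and> (\<lambda>j. snd kq (Inl j)) = stepv (fst kq)"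
  proof
    fix i assume i: "i \<in> {1..n}"
    obtain k where k: "k \<in> {0..d i}" "v (X i) = p i k" using vx i by blast
    have "stepv k \<in> vert_simplex (d i)" using k by (intro stepv_vert) simp
    then obtain q where q: "q \<in> Q i" "\<forall>kk\<in>{1..r i}. q (Inr kk) \<in> {0,1}" "(\<lambda>j. q (Inl j)) = stepv k"
      using H9 i by (smt (verit, del_insts) Int_Collect imageE)
    show "\<exists>kq. fst kq \<le> d i \<and> v (X i) = p i (fst kq) \<and> snd kq \<in> Q i \<and>
      (\<forall>kk\<in>{1..r i}. snd kq (Inr kk) \<in> {0,1}) \<and> (\<lambda>j. snd kq (Inl j)) = stepv (fst kq)"
      using k q by (intro exI[of _ "(k, q)"]) simp
  qed
  then obtain g where g: "\<forall>i\<in>{1..n}. fst (g i) \<le> d i \<and> v (X i) = p i (fst (g i)) \<and> snd (g i) \<in> Q i \<and>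
      (\<forall>kk\<in>{1..r i}. snd (g i) (Inr kk) \<in> {0,1}) \<and> (\<lambda>j. snd (g i) (Inl j)) = stepv (fst (g i))"
    by (rule bchoice[THEN exE]) blast
  define K where "K i = fst (g i)" for i
  define qq where "qq i = snd (g i)" for i
  have Kd: "K i \<le> d i" and vXK: "v (X i) = p i (K i)" and qQ: "qq i \<in> Q i"
    and qb: "\<forall>kk\<in>{1..r i}. qq i (Inr kk) \<in> {0,1}" and ql: "(\<lambda>j. qq i (Inl j)) = stepv (K i)"
    if "i \<in> {1..n}" for i
    using g that unfolding K_def qq_def by auto
  define V where "V c = (case c of X i \<Rightarrow> v (X i) | Z i j \<Rightarrow> (if i \<in> {1..n} then stepv (K i) j else 0)
      | Mu t \<Rightarrow> v (Mu t) | Dl i kk \<Rightarrow> (if i \<in> {1..n} then qq i (Inr kk) else 0))" for c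
  have V_simps: "V (X i) = v (X i)" "V (Z i j) = (if i \<in> {1..n} then stepv (K i) j else 0)"
    "V (Mu t) = v (Mu t)" "V (Dl i kk) = (if i \<in> {1..n} then qq i (Inr kk) else 0)" for i j t kk
    unfolding V_def by simp_all
  have vX0: "i \<notin> {1..n} \<Longrightarrow> v (X i) = 0" for i using vs unfolding supp_in_def by simp
  have vM0: "t \<notin> {1..m} \<Longrightarrow> v (Mu t) = 0" for t using vs unfolding supp_in_def by simp
  have Vs: "supp_in (IX n \<union> IZ n d \<union> IM m \<union> ID n r) V"
    unfolding supp_in_def
  proof (intro allI impI)
    fix c assume c: "c \<notin> IX n \<union> IZ n d \<union> IM m \<union> ID n r"
    show "V c = 0"
    proof (cases c)
      case (X i) then show ?thesis using c vX0 V_simps by simp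
    next
      case (Z i j) then show ?thesis using c V_simps Kd[of i] unfolding stepv_def
        by (cases "i \<in> {1..n}") auto
    next
      case (Mu t) then show ?thesis using c vM0 V_simps by simp
    next
      case (Dl i kk)
      show ?thesis
      proof (cases "i \<in> {1..n}")
        case True
        then have "kk \<notin> {1..r i}" using c Dl by simp
        then have "Inr kk \<notin> Inl ` {1..d i} \<union> Inr ` {1..r i}" by auto
        then have "qq i (Inr kk) = 0" using Q_supp[OF HQ[rule_format, OF True] qQ[OF True]]
          unfolding supp_in_def by blast
        then show ?thesis using Dl True V_simps by simp
      qed (use Dl V_simps in auto)
    qed
  qed
  have zV: "zvec V i = stepv (K i)" if "i \<in> {1..n}" for i
    unfolding zvec_def using that V_simps by simp
  have zdV: "zdvec V i = qq i" if i: "i \<in> {1..n}" for i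
  proof
    fix q show "zdvec V i q = qq i q"
    proof (cases q)
      case (Inl j)
      then show ?thesis unfolding zdvec_def using i V_simps fun_cong[OF ql[OF i], of j] by simp
    next
      case (Inr kk)
      then show ?thesis unfolding zdvec_def using i V_simps by simp
    qed
  qed
  have rG: "restr (IZ n d \<union> IM m) V \<in> Gset n m d p f \<phi>"
    unfolding Gset_def mem_Collect_eq
  proof (intro conjI ballI)
    show "supp_in (IZ n d \<union> IM m) (restr (IZ n d \<union> IM m) V)" unfolding supp_in_def restr_def by simp
  next
    fix i assume i: "i \<in> {1..n}"
    show "zvec (restr (IZ n d \<union> IM m) V) i \<in> vert_simplex (d i)"
      unfolding zvec_restr[OF Vs] zV[OF i] using Kd[OF i] by (rule stepv_vert)
  next
    fix t assume t: "t \<in> {1..m}"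
    have "(\<lambda>i. if i \<in> {1..n} then ell d p f t i (zvec (restr (IZ n d \<union> IM m) V) i) else 0)
        = (\<lambda>i. if i \<in> {1..n} then f t i (v (X i)) else 0)"
    proof
      fix i show "(if i \<in> {1..n} then ell d p f t i (zvec (restr (IZ n d \<union> IM m) V) i) else 0)
        = (if i \<in> {1..n} then f t i (v (X i)) else 0)"
        using zvec_restr[OF Vs] zV ell_stepv[of "K _" d _ p f t, OF Kd] vXK by simp
    qed
    then show "restr (IZ n d \<union> IM m) V (Mu t) = \<phi> t (\<lambda>i. if i \<in> {1..n} then ell d p f t i (zvec (restr (IZ n d \<union> IM m) V) i) else 0)"
      using restr_ZM[OF Vs] V_simps vm t by simp
  qed
  have VE: "V \<in> Erel n m d p r f \<phi> P Q"
    unfolding Erel_def mem_Collect_eq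
  proof (intro conjI ballI)
    show "supp_in (IX n \<union> IZ n d \<union> IM m \<union> ID n r) V" by (rule Vs)
    show "restr (IZ n d \<union> IM m) V \<in> conv_hull (Gset n m d p f \<phi>)" using rG by (rule conv_hull_sing)
    show "(\<lambda>i. V (X i)) \<in> P" using vP V_simps by simp
  next
    fix i assume i: "i \<in> {1..n}"
    have "stepv (K i) \<in> Delta_simplex (d i)" using stepv_vert[OF Kd[OF i]] unfolding vert_simplex_def by simp
    moreover have "V (X i) = p i 0 + (\<Sum>j\<in>{1..d i}. (p i j - p i (j - 1)) * stepv (K i) j)"
      using x_stepv[of "K i" d i p, OF Kd[OF i]] vXK[OF i] V_simps by simp
    ultimately show "(V (X i), zvec V i) \<in> Bset d p i" unfolding Bset_def zV[OF i] by simp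
  next
    fix i assume i: "i \<in> {1..n}"
    show "zdvec V i \<in> Q i" using zdV[OF i] qQ[OF i] by simp
  qed
  have VB: "\<forall>c\<in>ID n r. V c \<in> {0,1}"
  proof
    fix c assume c: "c \<in> ID n r"
    then obtain i kk where ik: "c = Dl i kk" "i \<in> {1..n}" "kk \<in> {1..r i}" unfolding ID_def by blast
    then show "V c \<in> {0,1}" using qb[OF ik(2)] V_simps by simp
  qed
  have "restr (IX n \<union> IM m) V = v"
  proof
    fix c show "restr (IX n \<union> IM m) V c = v c"
    proof (cases c)
      case (X i) then show ?thesis using vX0 V_simps unfolding restr_def by auto
    next
      case (Mu t) then show ?thesis using vM0 V_simps unfolding restr_def by auto
    qed (use vs in \<open>auto simp: restr_def supp_in_def\<close>)
  qed
  moreover have "V \<in> Eset n m d p r f \<phi> P Q" unfolding Eset_def using VE VB by simp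
  ultimately show ?thesis by blast
qed


lemma Eset_unique:
  assumes H9: "\<forall>i\<in>{1..n}. (\<lambda>q j. q (Inl j)) ` (Q i \<inter> {q. \<forall>k\<in>{1..r i}. q (Inr k) \<in> {0, 1}}) = vert_simplex (d i)"
    and HQ: "\<forall>i\<in>{1..n}. polytope_in (Inl ` {1..d i} \<union> Inr ` {1..r i}) (Q i)"
    and s: "s \<in> Eset n m d p r f \<phi> P Q" and s': "s' \<in> Eset n m d p r f \<phi> P Q"
    and eqD: "\<forall>c\<in>ID n r. s c = s' c"
  shows "s = s'"
proof -
  have sE: "s \<in> Erel n m d p r f \<phi> P Q" and s'E: "s' \<in> Erel n m d p r f \<phi> P Q"
    using s s' unfolding Eset_def by auto
  have ss: "supp_in (IX n \<union> IZ n d \<union> IM m \<union> ID n r) s" using Erel_supp[OF sE] .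
  have ss': "supp_in (IX n \<union> IZ n d \<union> IM m \<union> ID n r) s'" using Erel_supp[OF s'E] .
  have zeq: "s (Z i j) = s' (Z i j)" for i j
  proof (cases "i \<in> {1..n} \<and> j \<in> {1..d i}")
    case True
    then have i: "i \<in> {1..n}" and j: "j \<in> {1..d i}" by auto
    have cv: "cvx (Q i)" using HQ i unfolding polytope_in_def by (blast intro: poly_cvx)
    have qs: "zdvec s i \<in> Q i" "zdvec s' i \<in> Q i" using sE s'E i unfolding Erel_def by auto
    define q where "q = (\<lambda>c. (1 - 1/2) * zdvec s i c + (1/2) * zdvec s' i c)"
    have h: "\<And>a b \<theta>. a \<in> Q i \<Longrightarrow> b \<in> Q i \<Longrightarrow> 0 \<le> \<theta> \<Longrightarrow> \<theta> \<le> 1 \<Longrightarrow> (\<lambda>c. (1 - \<theta>) * a c + \<theta> * b c) \<in> Q i"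
      using cv unfolding cvx_def by blast
    have qQ: "q \<in> Q i" unfolding q_def by (rule h[OF qs]) simp_all
    have "\<forall>k\<in>{1..r i}. q (Inr k) \<in> {0,1}"
    proof
      fix k assume k: "k \<in> {1..r i}"
      then have "s (Dl i k) = s' (Dl i k)" "s (Dl i k) \<in> {0,1}" using eqD s i unfolding Eset_def by auto
      then show "q (Inr k) \<in> {0,1}" unfolding q_def zdvec_def by auto
    qed
    then have "(\<lambda>j. q (Inl j)) \<in> vert_simplex (d i)" using H9 i qQ by blast
    then have "q (Inl j) \<in> {0,1}" using j unfolding vert_simplex_def by auto
    moreover have "s (Z i j) \<in> {0,1}" "s' (Z i j) \<in> {0,1}"
      using Eset_zvert[OF H9 s i] Eset_zvert[OF H9 s' i] j unfolding vert_simplex_def zvec_def by auto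
    ultimately show ?thesis unfolding q_def zdvec_def by auto
  next
    case False
    then show ?thesis using ss ss' unfolding supp_in_def by auto
  qed
  have zv: "zvec s i = zvec s' i" for i unfolding zvec_def using zeq by simp
  show ?thesis
  proof
    fix c show "s c = s' c"
    proof (cases c)
      case (X i)
      show ?thesis
      proof (cases "i \<in> {1..n}")
        case True then show ?thesis using Erel_x[OF sE True] Erel_x[OF s'E True] zv X by simp
      next
        case False then show ?thesis using ss ss' X unfolding supp_in_def by simp
      qed
    next
      case (Z i j) then show ?thesis using zeq by simp
    next
      case (Mu t)
      show ?thesis
      proof (cases "t \<in> {1..m}")
        case True
        have zf: "zvec s = zvec s'" by (rule ext) (rule zv)
        have "\<phi> t (\<lambda>i. if i \<in> {1..n} then ell d p f t i (zvec s i) else 0) = \<phi> t (\<lambda>i. if i \<in> {1..n} then ell d p f t i (zvec s' i) else 0)"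
          using arg_cong[where f = "\<lambda>z. \<phi> t (\<lambda>i. if i \<in> {1..n} then ell d p f t i (z i) else 0)", OF zf] by simp
        then show ?thesis using Eset_mu[OF H9 s True] Eset_mu[OF H9 s' True] Mu by simp
      next
        case False then show ?thesis using ss ss' Mu unfolding supp_in_def by simp
      qed
    next
      case (Dl i k)
      show ?thesis
      proof (cases "Dl i k \<in> ID n r")
        case True then show ?thesis using eqD Dl by simp
      next
        case False then show ?thesis using ss ss' Dl unfolding supp_in_def by simp
      qed
    qed
  qed
qed

lemma poly_of_finite:
  assumes "finite I" "finite C"
  shows "polyhedron_in I {v. supp_in I v \<and> (\<forall>ab\<in>C. (\<Sum>c\<in>I. fst ab c * v c) \<ge> snd ab)}"
proof -
  obtain xs where xs: "set xs = C" using finite_list[OF assms(2)] by blast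
  have eq: "(\<forall>ab\<in>C. (\<Sum>c\<in>I. fst ab c * v c) \<ge> snd ab) \<longleftrightarrow>
      (\<forall>k<length xs. (\<Sum>c\<in>I. fst (xs!k) c * v c) \<ge> snd (xs!k))" for v
    unfolding xs[symmetric] by (rule all_set_conv_all_nth)
  show ?thesis unfolding polyhedron_in_def
    apply (rule conjI[OF assms(1)])
    apply (rule exI[of _ "length xs"], rule exI[of _ "\<lambda>k c. fst (xs!k) c"], rule exI[of _ "\<lambda>k. snd (xs!k)"])
    using eq by simp
qed

lemma big_M_poly:
  fixes E :: "('a \<Rightarrow> real) set"
  assumes finI: "finite I" and JI: "J \<subseteq> I" and Esupp: "\<forall>s\<in>E. supp_in I s"
    and Ebin: "\<forall>s\<in>E. \<forall>c\<in>J. s c \<in> {0,1}"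
    and uniq: "\<forall>s\<in>E. \<forall>s'\<in>E. (\<forall>c\<in>J. s c = s' c) \<longrightarrow> s = s'"
  shows "\<exists>R. polyhedron_in I R \<and> E = R \<inter> {v. \<forall>c\<in>J. v c \<in> {0,1}}"
proof -
  have finJ: "finite J" using finI JI finite_subset by blast
  define pat where "pat T c = (if c \<in> T then (1::real) else 0)" for T :: "'a set" and c
  define feas where "feas T \<longleftrightarrow> (\<exists>s\<in>E. \<forall>c\<in>J. s c = pat T c)" for T
  define sT where "sT T = (SOME s. s \<in> E \<and> (\<forall>c\<in>J. s c = pat T c))" for T
  have sT: "sT T \<in> E" "\<forall>c\<in>J. sT T c = pat T c" if "feas T" for T
    using someI_ex[of "\<lambda>s. s \<in> E \<and> (\<forall>c\<in>J. s c = pat T c)"] that unfolding feas_def sT_def by blast+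
  have spat: "\<forall>c\<in>J. s c = pat {c\<in>J. s c = 1} c" if "s \<in> E" for s
    using Ebin that unfolding pat_def by auto
  have finE: "finite E"
  proof -
    have "E \<subseteq> sT ` Pow J"
    proof
      fix s assume s: "s \<in> E"
      define T where "T = {c\<in>J. s c = 1}"
      have f: "feas T" using s spat unfolding feas_def T_def by blast
      have "\<forall>c\<in>J. sT T c = s c" using sT(2)[OF f] spat[OF s] unfolding T_def by simp
      then have "sT T = s" using uniq sT(1)[OF f] s by blast
      moreover have "T \<in> Pow J" unfolding T_def by auto
      ultimately show "s \<in> sT ` Pow J" by blast
    qed
    then show ?thesis using finJ finite_subset by blast
  qed
  define D where "D = {\<bar>s c - s' c\<bar> | s s' c. s \<in> E \<and> s' \<in> E \<and> c \<in> I}"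
  have finD: "finite D"
  proof -
    have "D \<subseteq> (\<lambda>(s, s', c). \<bar>s c - s' c\<bar>) ` (E \<times> E \<times> I)"
    proof
      fix x assume "x \<in> D"
      then obtain s s' c where "x = \<bar>s c - s' c\<bar>" "s \<in> E" "s' \<in> E" "c \<in> I" unfolding D_def by blast
      then show "x \<in> (\<lambda>(s, s', c). \<bar>s c - s' c\<bar>) ` (E \<times> E \<times> I)" by (intro image_eqI[of _ _ "(s, s', c)"]) auto
    qed
    then show ?thesis using finE finI finite_subset by blast
  qed
  define M where "M = Max (insert 0 D)"
  have M0: "M \<ge> 0" unfolding M_def using finD by simp
  have MD: "\<bar>s c - s' c\<bar> \<le> M" if "s \<in> E" "s' \<in> E" "c \<in> I" for s s' c
    unfolding M_def using finD that by (intro Max_ge) (auto simp: D_def)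
  define coef where "coef T c = (if c \<in> J then (if c \<in> T then -1 else 1) else (0::real))" for T c
  define h where "h T v = (\<Sum>c\<in>J. if c \<in> T then - v c else v c)" for T and v :: "'a \<Rightarrow> real"
  have coef_sum: "(\<Sum>c\<in>I. coef T c * v c) = h T v" for T v
  proof -
    have "(\<Sum>c\<in>I. coef T c * v c) = (\<Sum>c\<in>J. coef T c * v c)"
      using JI finI by (intro sum.mono_neutral_right) (auto simp: coef_def)
    then show ?thesis unfolding h_def coef_def by (auto intro!: sum.cong)
  qed
  have coef2_sum: "(\<Sum>c\<in>I. (M * coef T c - \<sigma> * (if c = c0 then 1 else 0)) * v c) = M * h T v - \<sigma> * v c0"
    if "c0 \<in> I" for T \<sigma> c0 v
  proof -
    have "(\<Sum>c\<in>I. (M * coef T c - \<sigma> * (if c = c0 then 1 else 0)) * v c)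
        = (\<Sum>c\<in>I. M * (coef T c * v c) - \<sigma> * (if c = c0 then v c else 0))"
      by (intro sum.cong refl) (simp add: algebra_simps)
    also have "\<dots> = M * (\<Sum>c\<in>I. coef T c * v c) - \<sigma> * (\<Sum>c\<in>I. (if c = c0 then v c else 0))"
      by (simp add: sum_subtractf sum_distrib_left)
    also have "(\<Sum>c\<in>I. (if c = c0 then v c else 0)) = v c0" using that finI by simp
    finally show ?thesis using coef_sum by simp
  qed
  have hdist: "card T + h T v = (\<Sum>c\<in>J. if (c \<in> T) = (c \<in> T') then 0 else 1)"
    if T: "T \<subseteq> J" "T' \<subseteq> J" and v: "\<forall>c\<in>J. v c = pat T' c" for T T' v
  proof -
    have "real (card T) = (\<Sum>c\<in>J. if c \<in> T then 1 else 0)"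
      using T finJ by (simp add: sum.If_cases Int_absorb1)
    then have "card T + h T v = (\<Sum>c\<in>J. (if c \<in> T then 1 else 0) + (if c \<in> T then - v c else v c))"
      unfolding h_def by (simp add: sum.distrib)
    also have "\<dots> = (\<Sum>c\<in>J. if (c \<in> T) = (c \<in> T') then 0 else 1)"
      using v unfolding pat_def by (intro sum.cong) auto
    finally show ?thesis .
  qed
  have hzero: "card T + h T v = 0" if "T \<subseteq> J" "\<forall>c\<in>J. v c = pat T c" for T v
    using hdist[OF that(1) that(1) that(2)] by simp
  have hone: "card T + h T v \<ge> 1" if T: "T \<subseteq> J" "T' \<subseteq> J" "T \<noteq> T'" and v: "\<forall>c\<in>J. v c = pat T' c" for T T' v
  proof -
    obtain c1 where c1: "c1 \<in> J" "(c1 \<in> T) \<noteq> (c1 \<in> T')" using T by blast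
    have "(1::real) \<le> (\<Sum>c\<in>J. if (c \<in> T) = (c \<in> T') then 0 else 1)"
      using member_le_sum[of c1 J "\<lambda>c. if (c \<in> T) = (c \<in> T') then (0::real) else 1"] c1 finJ by simp
    then show ?thesis using hdist[OF T(1,2) v] by simp
  qed
  define C1 where "C1 = (\<lambda>T. (coef T, 1 - real (card T))) ` {T. T \<subseteq> J \<and> \<not> feas T}"
  define C2 where "C2 = (\<lambda>(T, c0, \<sigma>). (\<lambda>c. M * coef T c - \<sigma> * (if c = c0 then 1 else 0), - \<sigma> * sT T c0 - M * real (card T)))
      ` ({T. T \<subseteq> J \<and> feas T} \<times> I \<times> {1, -1})"
  define R where "R = {v. supp_in I v \<and> (\<forall>ab\<in>C1 \<union> C2. (\<Sum>c\<in>I. fst ab c * v c) \<ge> snd ab)}"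
  have finC: "finite (C1 \<union> C2)" unfolding C1_def C2_def using finJ finI by simp
  have polyR: "polyhedron_in I R" unfolding R_def by (rule poly_of_finite[OF finI finC])
  have Rmem: "v \<in> R \<longleftrightarrow> supp_in I v \<and> (\<forall>T. T \<subseteq> J \<and> \<not> feas T \<longrightarrow> 1 - real (card T) \<le> h T v) \<and>
      (\<forall>T c0 \<sigma>. T \<subseteq> J \<and> feas T \<and> c0 \<in> I \<and> \<sigma> \<in> {1, -1} \<longrightarrow> - \<sigma> * sT T c0 - M * real (card T) \<le> M * h T v - \<sigma> * v c0)" for v
  proof -
    have "(\<forall>ab\<in>C1. (\<Sum>c\<in>I. fst ab c * v c) \<ge> snd ab) \<longleftrightarrow> (\<forall>T. T \<subseteq> J \<and> \<not> feas T \<longrightarrow> 1 - real (card T) \<le> h T v)"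
      unfolding C1_def by (simp add: coef_sum)
    moreover have "(\<forall>ab\<in>C2. (\<Sum>c\<in>I. fst ab c * v c) \<ge> snd ab) \<longleftrightarrow>
      (\<forall>T c0 \<sigma>. T \<subseteq> J \<and> feas T \<and> c0 \<in> I \<and> \<sigma> \<in> {1, -1} \<longrightarrow> - \<sigma> * sT T c0 - M * real (card T) \<le> M * h T v - \<sigma> * v c0)"
      (is "?L \<longleftrightarrow> ?R")
    proof
      assume L: ?L
      show ?R
      proof (intro allI impI)
        fix T c0 and \<sigma> :: real assume H: "T \<subseteq> J \<and> feas T \<and> c0 \<in> I \<and> \<sigma> \<in> {1, -1}"
        have "(\<lambda>c. M * coef T c - \<sigma> * (if c = c0 then 1 else 0), - \<sigma> * sT T c0 - M * real (card T)) \<in> C2"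
          unfolding C2_def using H by (intro image_eqI[of _ _ "(T, c0, \<sigma>)"]) auto
        from bspec[OF L this] have "(\<Sum>c\<in>I. (M * coef T c - \<sigma> * (if c = c0 then 1 else 0)) * v c) \<ge> - \<sigma> * sT T c0 - M * real (card T)"
          by simp
        then show "- \<sigma> * sT T c0 - M * real (card T) \<le> M * h T v - \<sigma> * v c0" using coef2_sum H by simp
      qed
    next
      assume R: ?R
      show ?L
      proof
        fix ab assume "ab \<in> C2"
        then obtain T c0 \<sigma> where H: "T \<subseteq> J \<and> feas T" "c0 \<in> I" "\<sigma> \<in> {1, -1}"
          "ab = (\<lambda>c. M * coef T c - \<sigma> * (if c = c0 then 1 else 0), - \<sigma> * sT T c0 - M * real (card T))"
          unfolding C2_def by auto
        then show "(\<Sum>c\<in>I. fst ab c * v c) \<ge> snd ab" using R coef2_sum[OF H(2)] by simp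
      qed
    qed
    ultimately show ?thesis unfolding R_def by blast
  qed
  have "E = R \<inter> {v. \<forall>c\<in>J. v c \<in> {0,1}}"
  proof
    show "E \<subseteq> R \<inter> {v. \<forall>c\<in>J. v c \<in> {0,1}}"
    proof
      fix s assume s: "s \<in> E"
      define T' where "T' = {c\<in>J. s c = 1}"
      have T': "T' \<subseteq> J" "\<forall>c\<in>J. s c = pat T' c" using spat[OF s] unfolding T'_def by auto
      have fT': "feas T'" using s T' unfolding feas_def by blast
      have "s \<in> R"
        unfolding Rmem
      proof (intro conjI allI impI)
        show "supp_in I s" using Esupp s by blast
      next
        fix T assume T: "T \<subseteq> J \<and> \<not> feas T"
        then have "T \<noteq> T'" using fT' by blast
        then have "card T + h T s \<ge> 1" using hone[OF _ T'(1) _ T'(2)] T by blast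
        then show "1 - real (card T) \<le> h T s" by simp
      next
        fix T c0 and \<sigma> :: real assume H: "T \<subseteq> J \<and> feas T \<and> c0 \<in> I \<and> \<sigma> \<in> {1, -1}"
        show "- \<sigma> * sT T c0 - M * real (card T) \<le> M * h T s - \<sigma> * s c0"
        proof (cases "T = T'")
          case True
          have "\<forall>c\<in>J. sT T c = s c" using sT(2)[of T] H T'(2) True by simp
          then have "sT T = s" using uniq sT(1)[of T] H s by blast
          moreover have "card T + h T s = 0" using hzero[of T s] H T' True by simp
          then have "h T s = - real (card T)" by linarith
          ultimately show ?thesis by simp
        next
          case False
          have g1: "card T + h T s \<ge> 1" using hone[OF _ T'(1) False T'(2)] H by blast
          have "\<bar>s c0 - sT T c0\<bar> \<le> M" using MD[OF s sT(1)[of T]] H by blast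
          moreover have "\<sigma> = 1 \<or> \<sigma> = -1" using H by simp
          then have "\<sigma> * (s c0 - sT T c0) \<le> \<bar>s c0 - sT T c0\<bar>" by (elim disjE) simp_all
          ultimately have "\<sigma> * (s c0 - sT T c0) \<le> M" by simp
          also have "M \<le> M * (card T + h T s)" using mult_left_mono[OF g1 M0] by simp
          finally show ?thesis by (simp add: algebra_simps)
        qed
      qed
      moreover have "\<forall>c\<in>J. s c \<in> {0,1}" using Ebin s by blast
      ultimately show "s \<in> R \<inter> {v. \<forall>c\<in>J. v c \<in> {0,1}}" by blast
    qed
  next
    show "R \<inter> {v. \<forall>c\<in>J. v c \<in> {0,1}} \<subseteq> E"
    proof
      fix v assume v: "v \<in> R \<inter> {v. \<forall>c\<in>J. v c \<in> {0,1}}"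
      define T' where "T' = {c\<in>J. v c = 1}"
      have T': "T' \<subseteq> J" "\<forall>c\<in>J. v c = pat T' c" using v unfolding T'_def pat_def by auto
      have vR: "supp_in I v" "\<forall>T. T \<subseteq> J \<and> \<not> feas T \<longrightarrow> 1 - real (card T) \<le> h T v"
        "\<forall>T c0 \<sigma>. T \<subseteq> J \<and> feas T \<and> c0 \<in> I \<and> \<sigma> \<in> {1, -1} \<longrightarrow> - \<sigma> * sT T c0 - M * real (card T) \<le> M * h T v - \<sigma> * v c0"
        using v Rmem by blast+
      have z: "card T' + h T' v = 0" using hzero[OF T'] .
      have fT': "feas T'"
      proof (rule ccontr)
        assume "\<not> feas T'"
        then have "1 - real (card T') \<le> h T' v" using vR(2) T' by blast
        then show False using z by simp
      qed
      have "v = sT T'"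
      proof
        fix c show "v c = sT T' c"
        proof (cases "c \<in> I")
          case True
          have a: "M * h T' v - v c \<ge> - sT T' c - M * card T'" using vR(3)[rule_format, of T' c 1] fT' T' True
            by simp
          have b: "M * h T' v + v c \<ge> sT T' c - M * card T'" using vR(3)[rule_format, of T' c "-1"] fT' T' True
            by simp
          have "M * (card T' + h T' v) = 0" using z by simp
          then have "M * h T' v + M * real (card T') = 0" by (simp add: distrib_left)
          then show ?thesis using a b by linarith
        next
          case False
          have "supp_in I (sT T')" using Esupp sT(1)[OF fT'] by blast
          then show ?thesis using vR(1) False unfolding supp_in_def by simp
        qed
      qed
      then show "v \<in> E" using sT(1)[OF fT'] by simp
    qed
  qed
  then show ?thesis using polyR by blast
qed

lemma delta_cvx: "cvx (Delta_simplex d)"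
  unfolding cvx_def
proof (intro ballI allI impI)
  fix a b and \<theta> :: real assume a: "a \<in> Delta_simplex d" and b: "b \<in> Delta_simplex d" and th: "0 \<le> \<theta> \<and> \<theta> \<le> 1"
  have th1: "0 \<le> 1 - \<theta>" using th by simp
  show "(\<lambda>c. (1 - \<theta>) * a c + \<theta> * b c) \<in> Delta_simplex d"
    unfolding Delta_simplex_def mem_Collect_eq
  proof (intro conjI impI allI)
    show "supp_in {1..d} (\<lambda>c. (1 - \<theta>) * a c + \<theta> * b c)"
      using a b unfolding Delta_simplex_def supp_in_def by simp
  next
    assume d: "1 \<le> d"
    have "a 1 \<le> 1" "b 1 \<le> 1" using a b d unfolding Delta_simplex_def by auto
    then show "(1 - \<theta>) * a 1 + \<theta> * b 1 \<le> 1" using th th1 by (intro convex_bound_le) auto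
  next
    assume d: "1 \<le> d"
    have "a d \<ge> 0" "b d \<ge> 0" using a b d unfolding Delta_simplex_def by auto
    then show "(1 - \<theta>) * a d + \<theta> * b d \<ge> 0" using th th1 by simp
  next
    fix j assume j: "1 \<le> j \<and> j < d"
    have "a (j+1) \<le> a j" "b (j+1) \<le> b j" using a b j unfolding Delta_simplex_def by auto
    then show "(1 - \<theta>) * a (j+1) + \<theta> * b (j+1) \<le> (1 - \<theta>) * a j + \<theta> * b j"
      using th th1 by (intro add_mono mult_left_mono) auto
  qed
qed

lemma cvxD: "cvx S \<Longrightarrow> a \<in> S \<Longrightarrow> b \<in> S \<Longrightarrow> 0 \<le> \<theta> \<Longrightarrow> \<theta> \<le> 1 \<Longrightarrow> (\<lambda>c. (1 - \<theta>) * a c + \<theta> * b c) \<in> S"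
  unfolding cvx_def by blast

lemma conv_hull_cvx: "cvx (conv_hull S)"
  unfolding cvx_def using conv_hull_comb2 by blast

lemma Erel_cvx:
  assumes cP: "cvx P" and cQ: "\<forall>i\<in>{1..n}. cvx (Q i)"
  shows "cvx (Erel n m d p r f \<phi> P Q)"
  unfolding cvx_def
proof (intro ballI allI impI)
  fix a b and \<theta> :: real assume a: "a \<in> Erel n m d p r f \<phi> P Q" and b: "b \<in> Erel n m d p r f \<phi> P Q"
    and th: "0 \<le> \<theta> \<and> \<theta> \<le> 1"
  define v where "v = (\<lambda>c. (1 - \<theta>) * a c + \<theta> * b c)"
  have "supp_in (IX n \<union> IZ n d \<union> IM m \<union> ID n r) v"
    using a b unfolding Erel_def supp_in_def v_def by simp
  moreover have "restr (IZ n d \<union> IM m) v \<in> conv_hull (Gset n m d p f \<phi>)"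
  proof -
    have "restr (IZ n d \<union> IM m) v = (\<lambda>c. (1 - \<theta>) * restr (IZ n d \<union> IM m) a c + \<theta> * restr (IZ n d \<union> IM m) b c)"
      unfolding v_def restr_def by auto
    moreover have "restr (IZ n d \<union> IM m) a \<in> conv_hull (Gset n m d p f \<phi>)"
      "restr (IZ n d \<union> IM m) b \<in> conv_hull (Gset n m d p f \<phi>)" using a b unfolding Erel_def by auto
    ultimately show ?thesis using conv_hull_comb2[of _ "Gset n m d p f \<phi>" _ \<theta>] th by simp
  qed
  moreover have "(\<lambda>i. v (X i)) \<in> P"
  proof -
    have ab: "(\<lambda>i. a (X i)) \<in> P" "(\<lambda>i. b (X i)) \<in> P" using a b unfolding Erel_def by auto
    have "(\<lambda>i. (1 - \<theta>) * a (X i) + \<theta> * b (X i)) \<in> P" using cvxD[OF cP ab(1) ab(2), of \<theta>] th by simp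
    then show ?thesis unfolding v_def by simp
  qed
  moreover have "(v (X i), zvec v i) \<in> Bset d p i \<and> zdvec v i \<in> Q i" if i: "i \<in> {1..n}" for i
  proof -
    have ba: "(a (X i), zvec a i) \<in> Bset d p i" "zdvec a i \<in> Q i" using a i unfolding Erel_def by auto
    have bb: "(b (X i), zvec b i) \<in> Bset d p i" "zdvec b i \<in> Q i" using b i unfolding Erel_def by auto
    have zv: "zvec v i = (\<lambda>j. (1 - \<theta>) * zvec a i j + \<theta> * zvec b i j)" unfolding v_def zvec_def by simp
    have zdv: "zdvec v i = (\<lambda>q. (1 - \<theta>) * zdvec a i q + \<theta> * zdvec b i q)"
      unfolding v_def zdvec_def by (auto split: sum.splits)
    have "zvec a i \<in> Delta_simplex (d i)" "zvec b i \<in> Delta_simplex (d i)" using ba bb unfolding Bset_def by auto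
    then have "zvec v i \<in> Delta_simplex (d i)" unfolding zv using cvxD[OF delta_cvx, of "zvec a i" "d i" "zvec b i" \<theta>] th by simp
    moreover have "v (X i) = p i 0 + (\<Sum>j\<in>{1..d i}. (p i j - p i (j - 1)) * zvec v i j)"
    proof -
      have ea: "a (X i) = p i 0 + (\<Sum>j\<in>{1..d i}. (p i j - p i (j - 1)) * zvec a i j)" using ba unfolding Bset_def by simp
      have eb: "b (X i) = p i 0 + (\<Sum>j\<in>{1..d i}. (p i j - p i (j - 1)) * zvec b i j)" using bb unfolding Bset_def by simp
      have "(\<Sum>j\<in>{1..d i}. (p i j - p i (j - 1)) * zvec v i j) = (1 - \<theta>) * (\<Sum>j\<in>{1..d i}. (p i j - p i (j - 1)) * zvec a i j) + \<theta> * (\<Sum>j\<in>{1..d i}. (p i j - p i (j - 1)) * zvec b i j)"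
        unfolding zv by (rule lin_comb2)
      then show ?thesis unfolding v_def using ea eb by (simp add: algebra_simps)
    qed
    moreover have "zdvec v i \<in> Q i" unfolding zdv using cvxD[of "Q i", OF _ ba(2) bb(2), of \<theta>] th cQ i by simp
    ultimately show ?thesis unfolding Bset_def by simp
  qed
  ultimately show "(\<lambda>c. (1 - \<theta>) * a c + \<theta> * b c) \<in> Erel n m d p r f \<phi> P Q"
    unfolding v_def Erel_def by blast
qed

lemma Q_bin_hull:
  assumes HQ: "polytope_in I Q" and Hid: "\<forall>q. is_vertex q Q \<longrightarrow> (\<forall>k\<in>K. q (Inr k) \<in> {0, 1})"
    and q: "q \<in> Q"
  shows "q \<in> conv_hull (Q \<inter> {q. \<forall>k\<in>K. q (Inr k) \<in> {0, 1}})"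
proof -
  have "q \<in> conv_hull {q. is_vertex q Q}" by (rule KM[OF HQ q])
  moreover have "{q. is_vertex q Q} \<subseteq> Q \<inter> {q. \<forall>k\<in>K. q (Inr k) \<in> {0, 1}}"
    using Hid unfolding is_vertex_def by auto
  ultimately show ?thesis using conv_hull_mono by blast
qed

definition zz :: "(nat \<Rightarrow> real) \<Rightarrow> nat \<Rightarrow> nat \<Rightarrow> real" where
  "zz z d j = (if j = 0 then 1 else if j \<le> d then z j else 0)"

lemma weight_id:
  fixes u :: "nat \<Rightarrow> real" and \<kappa> :: "nat \<Rightarrow> nat"
  assumes u: "\<forall>l<N. u l \<ge> 0" "(\<Sum>l<N. u l) = 1" and ka: "\<forall>l<N. \<kappa> l \<le> d"
    and z: "\<forall>j\<in>{1..d}. z j = (\<Sum>l<N. u l * stepv (\<kappa> l) j)" and k: "k \<le> d"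
  shows "(\<Sum>l\<in>{l. l < N \<and> \<kappa> l = k}. u l) = zz z d k - zz z d (k + 1)"
proof -
  have zzs: "zz z d j = (\<Sum>l<N. u l * (if j \<le> \<kappa> l then 1 else 0))" if j: "j \<le> d + 1" for j
  proof (cases "j = 0")
    case True then show ?thesis unfolding zz_def using u(2) by simp
  next
    case False
    show ?thesis
    proof (cases "j \<le> d")
      case True
      then have "z j = (\<Sum>l<N. u l * stepv (\<kappa> l) j)" using z False by simp
      also have "\<dots> = (\<Sum>l<N. u l * (if j \<le> \<kappa> l then 1 else 0))"
        using False by (intro sum.cong refl) (simp add: stepv_def)
      finally show ?thesis unfolding zz_def using False True by simp
    next
      case jd: False
      then have "j = d + 1" using j by simp
      then have "\<forall>l<N. \<not> j \<le> \<kappa> l" using ka by auto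
      then have "(\<Sum>l<N. u l * (if j \<le> \<kappa> l then 1 else 0)) = 0" by simp
      then show ?thesis unfolding zz_def using False jd by simp
    qed
  qed
  have "zz z d k - zz z d (k + 1) = (\<Sum>l<N. u l * ((if k \<le> \<kappa> l then 1 else 0) - (if k + 1 \<le> \<kappa> l then 1 else 0)))"
    using zzs[of k] zzs[of "k+1"] k by (simp add: sum_subtractf algebra_simps)
  also have "\<dots> = (\<Sum>l<N. if \<kappa> l = k then u l else 0)"
    by (intro sum.cong refl) auto
  also have "\<dots> = (\<Sum>l\<in>{l. l < N \<and> \<kappa> l = k}. u l)"
    by (simp add: sum.If_cases lessThan_def Collect_conj_eq Int_commute)
  finally show ?thesis by simp
qed

lemma group_sum:
  fixes F :: "nat \<Rightarrow> real" and \<kappa> :: "nat \<Rightarrow> nat"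
  assumes "\<forall>l<N. \<kappa> l \<le> d"
  shows "(\<Sum>l<N. F l) = (\<Sum>k\<in>{0..d}. \<Sum>l\<in>{l. l < N \<and> \<kappa> l = k}. F l)"
proof -
  have "(\<Sum>k\<in>{0..d}. sum F {l \<in> {..<N}. \<kappa> l = k}) = sum F {..<N}"
    using assms by (intro sum.group) auto
  then show ?thesis by simp
qed

lemma step2:
  assumes H9: "\<forall>i\<in>{1..n}. (\<lambda>q j. q (Inl j)) ` (Q i \<inter> {q. \<forall>k\<in>{1..r i}. q (Inr k) \<in> {0, 1}}) = vert_simplex (d i)"
    and HQ: "\<forall>i\<in>{1..n}. polytope_in (Inl ` {1..d i} \<union> Inr ` {1..r i}) (Q i)"
    and Hid: "\<forall>i\<in>{1..n}. \<forall>q. is_vertex q (Q i) \<longrightarrow> (\<forall>k\<in>{1..r i}. q (Inr k) \<in> {0, 1})"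
    and cP: "cvx P"
    and vx: "is_vertex v (Erel n m d p r f \<phi> P Q)"
    and zb: "\<forall>i\<in>{1..n}. zvec v i \<in> vert_simplex (d i)"
    and c: "c \<in> ID n r"
  shows "v c \<in> {0,1}"
proof -
  let ?E = "Erel n m d p r f \<phi> P Q"
  obtain i0 kk0 where c0: "c = Dl i0 kk0" "i0 \<in> {1..n}" "kk0 \<in> {1..r i0}" using c unfolding ID_def by blast
  have vE: "v \<in> ?E" using vx unfolding is_vertex_def by simp
  have vs: "supp_in (IX n \<union> IZ n d \<union> IM m \<union> ID n r) v" using Erel_supp[OF vE] .
  have cQ: "\<forall>i\<in>{1..n}. cvx (Q i)" using HQ unfolding polytope_in_def by (blast intro: poly_cvx)
  have cE: "cvx ?E" by (rule Erel_cvx[OF cP cQ])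
  have q0: "zdvec v i0 \<in> Q i0" using vE c0 unfolding Erel_def by auto
  have "zdvec v i0 \<in> conv_hull (Q i0 \<inter> {q. \<forall>k\<in>{1..r i0}. q (Inr k) \<in> {0, 1}})"
    using Q_bin_hull[OF HQ[rule_format, OF c0(2)] bspec[OF Hid c0(2)] q0] .
  then obtain S al qs where h: "\<forall>l<(S::nat). al l \<ge> 0 \<and> qs l \<in> Q i0 \<inter> {q. \<forall>k\<in>{1..r i0}. q (Inr k) \<in> {0, 1}}"
    "(\<Sum>l<S. al l) = 1" "zdvec v i0 = (\<lambda>c. \<Sum>l<S. al l * qs l c)"
    by (rule conv_hullE)
  have hc: "zdvec v i0 q = (\<Sum>l<S. al l * qs l q)" for q using h(3) by simp
  have qsupp: "supp_in (Inl ` {1..d i0} \<union> Inr ` {1..r i0}) (qs l)" if "l < S" for l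
    using Q_supp[OF HQ[rule_format, OF c0(2)]] h(1) that by blast
  have qstep: "\<exists>k\<le>d i0. (\<lambda>j. qs l (Inl j)) = stepv k" if "l < S" for l
  proof -
    have "(\<lambda>j. qs l (Inl j)) \<in> vert_simplex (d i0)" using H9 c0(2) h(1) that by blast
    then show ?thesis by (rule vert_stepv)
  qed
  have qz: "qs l (Inl j) = v (Z i0 j)" if l: "l < S" "al l > 0" for l j
  proof (cases "j \<in> {1..d i0}")
    case True
    have A: "\<forall>l<S. al l \<ge> 0 \<and> 0 \<le> qs l (Inl j) \<and> qs l (Inl j) \<le> 1"
    proof (intro allI impI)
      fix l assume l: "l < S"
      obtain k where "(\<lambda>j. qs l (Inl j)) = stepv k" using qstep[OF l] by blast
      then have "qs l (Inl j) = stepv k j" by metis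
      then show "al l \<ge> 0 \<and> 0 \<le> qs l (Inl j) \<and> qs l (Inl j) \<le> 1" using h(1) l unfolding stepv_def by simp
    qed
    have vz: "v (Z i0 j) = (\<Sum>l<S. al l * qs l (Inl j))" using hc[of "Inl j"] unfolding zdvec_def by simp
    have "v (Z i0 j) \<in> {0,1}" using zb c0(2) True unfolding vert_simplex_def zvec_def by auto
    then have B: "(\<Sum>l<S. al l * qs l (Inl j)) \<in> {0,1}" using vz by simp
    show ?thesis using bin_force[OF A h(2) B l] vz by simp
  next
    case False
    then have "(Inl j :: nat + nat) \<notin> Inl ` {1..d i0} \<union> Inr ` {1..r i0}" by auto
    then have "qs l (Inl j) = 0" using qsupp[OF l(1)] unfolding supp_in_def by blast
    moreover have "v (Z i0 j) = 0" using vs False unfolding supp_in_def by simp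
    ultimately show ?thesis by simp
  qed
  define vs' where "vs' l = (\<lambda>c. case c of Dl i kk \<Rightarrow> (if i = i0 then qs l (Inr kk) else v c) | _ \<Rightarrow> v c)" for l
  have vs'_simps: "vs' l (X i) = v (X i)" "vs' l (Z i j) = v (Z i j)" "vs' l (Mu t) = v (Mu t)"
    "vs' l (Dl i kk) = (if i = i0 then qs l (Inr kk) else v (Dl i kk))" for l i j t kk
    unfolding vs'_def by simp_all
  have inE: "vs' l \<in> ?E" if l: "l < S" "al l > 0" for l
  proof -
    have supp: "supp_in (IX n \<union> IZ n d \<union> IM m \<union> ID n r) (vs' l)"
      unfolding supp_in_def
    proof (intro allI impI)
      fix c assume cn: "c \<notin> IX n \<union> IZ n d \<union> IM m \<union> ID n r"
      have v0: "v c = 0" using vs cn unfolding supp_in_def by blast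
      show "vs' l c = 0"
      proof (cases c)
        case (Dl i kk)
        show ?thesis
        proof (cases "i = i0")
          case True
          then have "kk \<notin> {1..r i0}" using cn Dl c0(2) by simp
          then have "(Inr kk :: nat + nat) \<notin> Inl ` {1..d i0} \<union> Inr ` {1..r i0}" by auto
          then have "qs l (Inr kk) = 0" using qsupp[OF l(1)] unfolding supp_in_def by blast
          then show ?thesis using Dl True vs'_simps by simp
        next
          case False then show ?thesis using Dl vs'_simps v0 by simp
        qed
      qed (use v0 in \<open>simp_all add: vs'_simps\<close>)
    qed
    have rr: "restr (IZ n d \<union> IM m) (vs' l) = restr (IZ n d \<union> IM m) v"
    proof
      fix c show "restr (IZ n d \<union> IM m) (vs' l) c = restr (IZ n d \<union> IM m) v c"
        unfolding restr_def by (cases c) (simp_all add: vs'_simps)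
    qed
    have zv: "zvec (vs' l) i = zvec v i" for i unfolding zvec_def vs'_simps by simp
    have zdv: "zdvec (vs' l) i = (if i = i0 then qs l else zdvec v i)" for i
    proof (cases "i = i0")
      case True
      show ?thesis
      proof
        fix q show "zdvec (vs' l) i q = (if i = i0 then qs l else zdvec v i) q"
          using True qz[OF l] unfolding zdvec_def by (cases q) (simp_all add: vs'_simps)
      qed
    next
      case False
      then show ?thesis unfolding zdvec_def by (auto simp: vs'_simps intro!: ext split: sum.splits)
    qed
    show ?thesis
      unfolding Erel_def mem_Collect_eq
    proof (intro conjI ballI)
      show "supp_in (IX n \<union> IZ n d \<union> IM m \<union> ID n r) (vs' l)" by (rule supp)
      show "restr (IZ n d \<union> IM m) (vs' l) \<in> conv_hull (Gset n m d p f \<phi>)" unfolding rr using vE unfolding Erel_def by simp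
      show "(\<lambda>i. vs' l (X i)) \<in> P" unfolding vs'_simps using vE unfolding Erel_def by simp
    next
      fix i assume i: "i \<in> {1..n}"
      show "(vs' l (X i), zvec (vs' l) i) \<in> Bset d p i" unfolding vs'_simps zv using vE i unfolding Erel_def by simp
    next
      fix i assume i: "i \<in> {1..n}"
      show "zdvec (vs' l) i \<in> Q i"
      proof (cases "i = i0")
        case True then show ?thesis using zdv h(1) l by simp
      next
        case False then show ?thesis using zdv vE i unfolding Erel_def by simp
      qed
    qed
  qed
  have veq: "v = (\<lambda>c. \<Sum>l<S. al l * vs' l c)"
  proof
    fix c show "v c = (\<Sum>l<S. al l * vs' l c)"
    proof (cases "\<exists>kk. c = Dl i0 kk")
      case True
      then obtain kk where kk: "c = Dl i0 kk" by blast
      have "v (Dl i0 kk) = (\<Sum>l<S. al l * qs l (Inr kk))" using hc[of "Inr kk"] unfolding zdvec_def by simp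
      then show ?thesis using kk vs'_simps by simp
    next
      case False
      then have "vs' l c = v c" for l by (cases c) (simp_all add: vs'_simps)
      then show ?thesis using h(2) by (simp add: sum_distrib_right[symmetric])
    qed
  qed
  have "\<forall>l<S. al l > 0 \<longrightarrow> vs' l \<in> {vs' l | l. l < S \<and> al l > 0}" by blast
  moreover have "\<forall>l<S. al l \<ge> 0" using h(1) by simp
  ultimately have "v \<in> conv_hull {vs' l | l. l < S \<and> al l > 0}"
    unfolding veq using h(2) by (intro conv_hull_pos)
  moreover have "{vs' l | l. l < S \<and> al l > 0} \<subseteq> ?E" using inE by blast
  ultimately have "v \<in> {vs' l | l. l < S \<and> al l > 0}"
    using vertex_hull[OF vx cE] by blast
  then obtain l where l: "l < S" "al l > 0" "v = vs' l" by blast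
  have "v c = qs l (Inr kk0)" using l(3) c0(1) vs'_simps by simp
  then show ?thesis using h(1) l(1) c0(3) by auto
qed

lemma step1:
  assumes H9: "\<forall>i\<in>{1..n}. (\<lambda>q j. q (Inl j)) ` (Q i \<inter> {q. \<forall>k\<in>{1..r i}. q (Inr k) \<in> {0, 1}}) = vert_simplex (d i)"
    and HQ: "\<forall>i\<in>{1..n}. polytope_in (Inl ` {1..d i} \<union> Inr ` {1..r i}) (Q i)"
    and Hid: "\<forall>i\<in>{1..n}. \<forall>q. is_vertex q (Q i) \<longrightarrow> (\<forall>k\<in>{1..r i}. q (Inr k) \<in> {0, 1})"
    and vx: "is_vertex v (Erel n m d p r f \<phi> {x. supp_in {1..n} x} Q)"
  shows "\<forall>i\<in>{1..n}. zvec v i \<in> vert_simplex (d i)"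
proof -
  let ?P = "{x. supp_in {1..n} x} :: (nat \<Rightarrow> real) set"
  let ?E = "Erel n m d p r f \<phi> ?P Q"
  let ?G = "Gset n m d p f \<phi>"
  have cP: "cvx ?P" unfolding cvx_def supp_in_def by simp
  have vE: "v \<in> ?E" using vx unfolding is_vertex_def by simp
  have vs: "supp_in (IX n \<union> IZ n d \<union> IM m \<union> ID n r) v" using Erel_supp[OF vE] .
  have cQ: "\<forall>i\<in>{1..n}. cvx (Q i)" using HQ unfolding polytope_in_def by (blast intro: poly_cvx)
  have cE: "cvx ?E" by (rule Erel_cvx[OF cP cQ])
  have "restr (IZ n d \<union> IM m) v \<in> conv_hull ?G" using vE unfolding Erel_def by simp
  then obtain K lam g where hg: "\<forall>l<(K::nat). lam l \<ge> 0 \<and> g l \<in> ?G" "(\<Sum>l<K. lam l) = 1"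
    "restr (IZ n d \<union> IM m) v = (\<lambda>c. \<Sum>l<K. lam l * g l c)"
    by (rule conv_hullE)
  have lam0: "\<forall>l<K. lam l \<ge> 0" using hg(1) by simp
  have gsupp: "supp_in (IZ n d \<union> IM m) (g l)" if "l < K" for l using hg(1) that unfolding Gset_def by auto
  have gz: "zvec (g l) i \<in> vert_simplex (d i)" if "l < K" "i \<in> {1..n}" for l i
    using hg(1) that unfolding Gset_def by auto
  have vZ: "v (Z i j) = (\<Sum>l<K. lam l * g l (Z i j))" for i j
    using fun_cong[OF hg(3), of "Z i j"] restr_ZM[OF vs] by simp
  have vM: "v (Mu t) = (\<Sum>l<K. lam l * g l (Mu t))" for t
    using fun_cong[OF hg(3), of "Mu t"] restr_ZM[OF vs] by simp
  define Pd where "Pd i S al qs \<longleftrightarrow> (\<forall>l<(S::nat). (al l :: real) \<ge> 0 \<and> qs l \<in> Q i \<inter> {q. \<forall>k\<in>{1..r i}. q (Inr k) \<in> {0, 1}})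
      \<and> (\<Sum>l<S. al l) = 1 \<and> zdvec v i = (\<lambda>c. \<Sum>l<S. al l * qs l c)" for i S al qs
  have ex: "\<exists>S al qs. Pd i S al qs" if i: "i \<in> {1..n}" for i
  proof -
    have q0: "zdvec v i \<in> Q i" using vE i unfolding Erel_def by auto
    have "zdvec v i \<in> conv_hull (Q i \<inter> {q. \<forall>k\<in>{1..r i}. q (Inr k) \<in> {0, 1}})"
      using Q_bin_hull[OF HQ[rule_format, OF i] bspec[OF Hid i] q0] .
    then obtain S al qs where "\<forall>l<(S::nat). al l \<ge> 0 \<and> qs l \<in> Q i \<inter> {q. \<forall>k\<in>{1..r i}. q (Inr k) \<in> {0, 1}}"
      "(\<Sum>l<S. al l) = 1" "zdvec v i = (\<lambda>c. \<Sum>l<S. al l * qs l c)"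
      by (rule conv_hullE)
    then have "Pd i S al qs" unfolding Pd_def by blast
    then show ?thesis by blast
  qed
  define tr where "tr i = (SOME t. Pd i (fst t) (fst (snd t)) (snd (snd t)))" for i
  define SS where "SS i = fst (tr i)" for i
  define AL where "AL i = fst (snd (tr i))" for i
  define QS where "QS i = snd (snd (tr i))" for i
  have Pdi: "Pd i (SS i) (AL i) (QS i)" if i: "i \<in> {1..n}" for i
  proof -
    obtain S al qs where "Pd i S al qs" using ex[OF i] by blast
    then have "Pd i (fst (S, al, qs)) (fst (snd (S, al, qs))) (snd (snd (S, al, qs)))" by simp
    then have "Pd i (fst (tr i)) (fst (snd (tr i))) (snd (snd (tr i)))"
      unfolding tr_def by (rule someI[where P = "\<lambda>t. Pd i (fst t) (fst (snd t)) (snd (snd t))"])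
    then show ?thesis unfolding SS_def AL_def QS_def .
  qed
  have hq: "\<forall>i\<in>{1..n}. (\<forall>l<SS i. AL i l \<ge> 0 \<and> QS i l \<in> Q i \<inter> {q. \<forall>k\<in>{1..r i}. q (Inr k) \<in> {0, 1}})
      \<and> (\<Sum>l<SS i. AL i l) = 1 \<and> zdvec v i = (\<lambda>c. \<Sum>l<SS i. AL i l * QS i l c)"
    using Pdi unfolding Pd_def by blast
  have AL0: "AL i s \<ge> 0" and QSQ: "QS i s \<in> Q i" and QSb: "\<forall>k\<in>{1..r i}. QS i s (Inr k) \<in> {0, 1}"
    if "i \<in> {1..n}" "s < SS i" for i s
    using hq that by auto
  have AL1: "(\<Sum>l<SS i. AL i l) = 1" if "i \<in> {1..n}" for i using hq that by auto
  have vQ: "zdvec v i c = (\<Sum>l<SS i. AL i l * QS i l c)" if "i \<in> {1..n}" for i c using hq that by auto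
  have QSsupp: "supp_in (Inl ` {1..d i} \<union> Inr ` {1..r i}) (QS i s)" if "i \<in> {1..n}" "s < SS i" for i s
    using Q_supp[OF HQ[rule_format, OF that(1)] QSQ[OF that]] .
  define kap where "kap i s = (SOME k. k \<le> d i \<and> (\<lambda>j. QS i s (Inl j)) = stepv k)" for i s
  have kap: "kap i s \<le> d i \<and> (\<lambda>j. QS i s (Inl j)) = stepv (kap i s)" if "i \<in> {1..n}" "s < SS i" for i s
  proof -
    have "(\<lambda>j. QS i s (Inl j)) \<in> vert_simplex (d i)" using H9 that QSQ[OF that] QSb[OF that] by blast
    then have "\<exists>k. k \<le> d i \<and> (\<lambda>j. QS i s (Inl j)) = stepv k" using vert_stepv by blast
    then show ?thesis unfolding kap_def by (rule someI_ex)
  qed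
  define kg where "kg i l = (SOME k. k \<le> d i \<and> zvec (g l) i = stepv k)" for i l
  have kg: "kg i l \<le> d i \<and> zvec (g l) i = stepv (kg i l)" if "l < K" "i \<in> {1..n}" for i l
  proof -
    have "\<exists>k. k \<le> d i \<and> zvec (g l) i = stepv k" using vert_stepv[OF gz[OF that]] by blast
    then show ?thesis unfolding kg_def by (rule someI_ex)
  qed
  define Fq where "Fq i k = {s. s < SS i \<and> kap i s = k}" for i k
  define Fg where "Fg i k = {l. l < K \<and> kg i l = k}" for i k
  define B where "B i k = (\<Sum>s\<in>Fq i k. AL i s)" for i k
  define Dv where "Dv i k kk = (\<Sum>s\<in>Fq i k. AL i s * QS i s (Inr kk))" for i k kk
  have finFq: "finite (Fq i k)" for i k unfolding Fq_def by simp
  have wq: "(\<Sum>l\<in>Fg i k. lam l) = B i k" if i: "i \<in> {1..n}" and k: "k \<le> d i" for i k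
  proof -
    have "(\<Sum>l\<in>Fg i k. lam l) = zz (zvec v i) (d i) k - zz (zvec v i) (d i) (k + 1)"
      unfolding Fg_def
    proof (rule weight_id[OF lam0 hg(2) _ _ k])
      show "\<forall>l<K. kg i l \<le> d i" using kg i by blast
      show "\<forall>j\<in>{1..d i}. zvec v i j = (\<Sum>l<K. lam l * stepv (kg i l) j)"
      proof
        fix j
        have "g l (Z i j) = stepv (kg i l) j" if "l < K" for l
          using fun_cong[OF conjunct2[OF kg[OF that i]], of j] unfolding zvec_def by simp
        then show "zvec v i j = (\<Sum>l<K. lam l * stepv (kg i l) j)" unfolding zvec_def vZ by simp
      qed
    qed
    moreover have "B i k = zz (zvec v i) (d i) k - zz (zvec v i) (d i) (k + 1)"
      unfolding B_def Fq_def
    proof (rule weight_id[OF _ AL1[OF i] _ _ k])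
      show "\<forall>l<SS i. AL i l \<ge> 0" using AL0 i by blast
      show "\<forall>l<SS i. kap i l \<le> d i" using kap i by blast
      show "\<forall>j\<in>{1..d i}. zvec v i j = (\<Sum>l<SS i. AL i l * stepv (kap i l) j)"
      proof
        fix j
        have "QS i l (Inl j) = stepv (kap i l) j" if "l < SS i" for l
          using fun_cong[OF conjunct2[OF kap[OF i that]], of j] by simp
        then show "zvec v i j = (\<Sum>l<SS i. AL i l * stepv (kap i l) j)"
          using vQ[OF i, of "Inl j"] unfolding zvec_def zdvec_def by simp
      qed
    qed
    ultimately show ?thesis by simp
  qed
  have Bpos: "B i (kg i l) > 0" if i: "i \<in> {1..n}" and l: "l < K" "lam l > 0" for i l
  proof -
    have kd: "kg i l \<le> d i" using kg[OF l(1) i] by simp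
    have "l \<in> Fg i (kg i l)" unfolding Fg_def using l by simp
    then have "lam l \<le> (\<Sum>l'\<in>Fg i (kg i l). lam l')"
      using lam0 unfolding Fg_def by (intro member_le_sum) auto
    then show ?thesis using wq[OF i kd] l(2) by simp
  qed
  define vl where "vl l c = (case c of
      X i \<Rightarrow> (if i \<in> {1..n} then p i 0 + (\<Sum>j\<in>{1..d i}. (p i j - p i (j - 1)) * g l (Z i j)) else 0)
    | Z i j \<Rightarrow> g l (Z i j) | Mu t \<Rightarrow> g l (Mu t)
    | Dl i kk \<Rightarrow> (if i \<in> {1..n} then Dv i (kg i l) kk / B i (kg i l) else 0))" for l c
  have vl_simps: "vl l (X i) = (if i \<in> {1..n} then p i 0 + (\<Sum>j\<in>{1..d i}. (p i j - p i (j - 1)) * g l (Z i j)) else 0)"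
    "vl l (Z i j) = g l (Z i j)" "vl l (Mu t) = g l (Mu t)"
    "vl l (Dl i kk) = (if i \<in> {1..n} then Dv i (kg i l) kk / B i (kg i l) else 0)" for l i j t kk
    unfolding vl_def by simp_all
  have zvl: "zvec (vl l) i = zvec (g l) i" for l i unfolding zvec_def vl_simps by simp
  have inE: "vl l \<in> ?E" if l: "l < K" "lam l > 0" for l
  proof -
    have supp: "supp_in (IX n \<union> IZ n d \<union> IM m \<union> ID n r) (vl l)"
      unfolding supp_in_def
    proof (intro allI impI)
      fix c assume cn: "c \<notin> IX n \<union> IZ n d \<union> IM m \<union> ID n r"
      show "vl l c = 0"
      proof (cases c)
        case (X i) then show ?thesis using cn vl_simps by auto
      next
        case (Z i j)
        then have "c \<notin> IZ n d \<union> IM m" using cn by simp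
        then show ?thesis using gsupp[OF l(1)] Z vl_simps unfolding supp_in_def by simp
      next
        case (Mu t)
        then have "c \<notin> IZ n d \<union> IM m" using cn by simp
        then show ?thesis using gsupp[OF l(1)] Mu vl_simps unfolding supp_in_def by simp
      next
        case (Dl i kk)
        show ?thesis
        proof (cases "i \<in> {1..n}")
          case True
          then have "kk \<notin> {1..r i}" using cn Dl by simp
          then have nin: "(Inr kk :: nat + nat) \<notin> Inl ` {1..d i} \<union> Inr ` {1..r i}" by auto
          have "QS i s (Inr kk) = 0" if "s \<in> Fq i (kg i l)" for s
            using QSsupp[OF True, of s] that nin unfolding Fq_def supp_in_def by blast
          then have "Dv i (kg i l) kk = 0" unfolding Dv_def by simp
          then show ?thesis using Dl vl_simps by simp
        next
          case False then show ?thesis using Dl vl_simps by auto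
        qed
      qed
    qed
    have rr: "restr (IZ n d \<union> IM m) (vl l) = g l"
    proof
      fix c
      have g0: "c \<notin> IZ n d \<union> IM m \<Longrightarrow> g l c = 0" using gsupp[OF l(1)] unfolding supp_in_def by blast
      show "restr (IZ n d \<union> IM m) (vl l) c = g l c"
        unfolding restr_def using g0 by (cases c) (auto simp: vl_simps)
    qed
    have gG: "g l \<in> ?G" using hg(1) l(1) by simp
    show ?thesis
      unfolding Erel_def mem_Collect_eq
    proof (intro conjI ballI)
      show "supp_in (IX n \<union> IZ n d \<union> IM m \<union> ID n r) (vl l)" by (rule supp)
      show "restr (IZ n d \<union> IM m) (vl l) \<in> conv_hull ?G" unfolding rr using gG by (rule conv_hull_sing)
      show "supp_in {1..n} (\<lambda>i. vl l (X i))" unfolding supp_in_def vl_simps by simp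
    next
      fix i assume i: "i \<in> {1..n}"
      have "zvec (g l) i \<in> Delta_simplex (d i)" using gz[OF l(1) i] unfolding vert_simplex_def by simp
      then show "(vl l (X i), zvec (vl l) i) \<in> Bset d p i" unfolding Bset_def zvl using i
        by (simp add: vl_simps zvec_def)
    next
      fix i assume i: "i \<in> {1..n}"
      define k where "k = kg i l"
      have kd: "k \<le> d i" and gk: "zvec (g l) i = stepv k" using kg[OF l(1) i] unfolding k_def by auto
      have Bp: "B i k > 0" using Bpos[OF i l] unfolding k_def .
      define pt where "pt = (\<lambda>c. \<Sum>s\<in>Fq i k. (AL i s / B i k) * QS i s c)"
      have ptQ: "pt \<in> Q i" unfolding pt_def
      proof (rule poly_conv)
        show "polyhedron_in (Inl ` {1..d i} \<union> Inr ` {1..r i}) (Q i)" using HQ i unfolding polytope_in_def by blast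
        show "finite (Fq i k)" by (rule finFq)
        show "\<forall>s\<in>Fq i k. 0 \<le> AL i s / B i k \<and> QS i s \<in> Q i"
          using AL0[OF i] QSQ[OF i] Bp unfolding Fq_def by simp
        show "(\<Sum>s\<in>Fq i k. AL i s / B i k) = 1"
          using Bp unfolding sum_divide_distrib[symmetric] B_def by simp
      qed
      have "zdvec (vl l) i = pt"
      proof
        fix q show "zdvec (vl l) i q = pt q"
        proof (cases q)
          case (Inl j)
          have "QS i s (Inl j) = stepv k j" if "s \<in> Fq i k" for s
            using that fun_cong[OF conjunct2[OF kap[OF i]], of s j] unfolding Fq_def by auto
          then have "pt (Inl j) = (\<Sum>s\<in>Fq i k. (AL i s / B i k) * stepv k j)" unfolding pt_def by simp
          also have "\<dots> = stepv k j * ((\<Sum>s\<in>Fq i k. AL i s) / B i k)"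
            by (simp add: sum_divide_distrib sum_distrib_left algebra_simps)
          also have "\<dots> = stepv k j" using Bp unfolding B_def by simp
          finally have "pt (Inl j) = stepv k j" .
          moreover have "zdvec (vl l) i (Inl j) = stepv k j"
            using fun_cong[OF gk, of j] unfolding zdvec_def zvec_def vl_simps by simp
          ultimately show ?thesis using Inl by simp
        next
          case (Inr kk)
          have "pt (Inr kk) = (\<Sum>s\<in>Fq i k. AL i s * QS i s (Inr kk)) / B i k"
            unfolding pt_def by (simp add: sum_divide_distrib)
          moreover have "zdvec (vl l) i (Inr kk) = Dv i k kk / B i k"
            unfolding zdvec_def vl_simps k_def using i by simp
          ultimately show ?thesis using Inr unfolding Dv_def by simp
        qed
      qed
      then show "zdvec (vl l) i \<in> Q i" using ptQ by simp
    qed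
  qed
  have veq: "v = (\<lambda>c. \<Sum>l<K. lam l * vl l c)"
  proof
    fix c show "v c = (\<Sum>l<K. lam l * vl l c)"
    proof (cases c)
      case (X i)
      show ?thesis
      proof (cases "i \<in> {1..n}")
        case True
        have vx: "v (X i) = p i 0 + (\<Sum>j\<in>{1..d i}. (p i j - p i (j - 1)) * v (Z i j))"
          using Erel_x[OF vE True] unfolding zvec_def .
        have "(\<Sum>l<K. lam l * vl l (X i)) = (\<Sum>l<K. lam l * p i 0 + (\<Sum>j\<in>{1..d i}. (p i j - p i (j - 1)) * (lam l * g l (Z i j))))"
          using True by (intro sum.cong refl) (simp add: vl_simps distrib_left sum_distrib_left mult.left_commute)
        also have "\<dots> = (\<Sum>l<K. lam l * p i 0) + (\<Sum>l<K. \<Sum>j\<in>{1..d i}. (p i j - p i (j - 1)) * (lam l * g l (Z i j)))"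
          by (rule sum.distrib)
        also have "(\<Sum>l<K. \<Sum>j\<in>{1..d i}. (p i j - p i (j - 1)) * (lam l * g l (Z i j)))
            = (\<Sum>j\<in>{1..d i}. \<Sum>l<K. (p i j - p i (j - 1)) * (lam l * g l (Z i j)))"
          by (rule sum.swap)
        also have "\<dots> = (\<Sum>j\<in>{1..d i}. (p i j - p i (j - 1)) * v (Z i j))"
          unfolding vZ by (simp add: sum_distrib_left)
        also have "(\<Sum>l<K. lam l * p i 0) = p i 0" using hg(2) by (simp add: sum_distrib_right[symmetric])
        finally show ?thesis using vx X by simp
      next
        case False
        then have "v (X i) = 0" using vs unfolding supp_in_def by simp
        moreover have "vl l (X i) = 0" for l using False vl_simps by auto
        ultimately show ?thesis using X by simp
      qed
    next
      case (Z i j) then show ?thesis using vZ vl_simps by simp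
    next
      case (Mu t) then show ?thesis using vM vl_simps by simp
    next
      case (Dl i kk)
      show ?thesis
      proof (cases "i \<in> {1..n}")
        case False
        then have "v (Dl i kk) = 0" using vs unfolding supp_in_def by auto
        moreover have "vl l (Dl i kk) = 0" for l using False vl_simps by auto
        ultimately show ?thesis using Dl by simp
      next
        case True
        have kgd: "\<forall>l<K. kg i l \<le> d i" using kg True by blast
        have kapd: "\<forall>s<SS i. kap i s \<le> d i" using kap True by blast
        have "(\<Sum>l<K. lam l * vl l (Dl i kk)) = (\<Sum>l<K. lam l * (Dv i (kg i l) kk / B i (kg i l)))"
          using True by (simp add: vl_simps)
        also have "\<dots> = (\<Sum>k\<in>{0..d i}. \<Sum>l\<in>{l. l < K \<and> kg i l = k}. lam l * (Dv i (kg i l) kk / B i (kg i l)))"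
          by (rule group_sum[OF kgd])
        also have "\<dots> = (\<Sum>k\<in>{0..d i}. \<Sum>l\<in>Fg i k. lam l * (Dv i k kk / B i k))"
          unfolding Fg_def by (intro sum.cong refl) auto
        also have "\<dots> = (\<Sum>k\<in>{0..d i}. (\<Sum>l\<in>Fg i k. lam l) * (Dv i k kk / B i k))"
          by (intro sum.cong refl) (rule sum_distrib_right[symmetric])
        also have "\<dots> = (\<Sum>k\<in>{0..d i}. Dv i k kk)"
        proof (intro sum.cong refl)
          fix k assume k: "k \<in> {0..d i}"
          show "(\<Sum>l\<in>Fg i k. lam l) * (Dv i k kk / B i k) = Dv i k kk"
          proof (cases "B i k = 0")
            case True
            then have "\<forall>s\<in>Fq i k. AL i s = 0" unfolding B_def
              using AL0[OF \<open>i \<in> {1..n}\<close>] finFq by (subst (asm) sum_nonneg_eq_0_iff) (auto simp: Fq_def)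
            then have "Dv i k kk = 0" unfolding Dv_def by simp
            then show ?thesis by simp
          next
            case False
            then show ?thesis using wq[OF \<open>i \<in> {1..n}\<close>] k by simp
          qed
        qed
        also have "\<dots> = (\<Sum>k\<in>{0..d i}. \<Sum>s\<in>{s. s < SS i \<and> kap i s = k}. AL i s * QS i s (Inr kk))"
          unfolding Dv_def Fq_def by simp
        also have "\<dots> = (\<Sum>s<SS i. AL i s * QS i s (Inr kk))"
          by (rule group_sum[OF kapd, symmetric])
        also have "\<dots> = v (Dl i kk)" using vQ[OF True, of "Inr kk"] unfolding zdvec_def by simp
        finally show ?thesis using Dl by simp
      qed
    qed
  qed
  have "\<forall>l<K. lam l > 0 \<longrightarrow> vl l \<in> {vl l | l. l < K \<and> lam l > 0}" by blast
  then have "v \<in> conv_hull {vl l | l. l < K \<and> lam l > 0}"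
    unfolding veq using lam0 hg(2) by (intro conv_hull_pos)
  moreover have "{vl l | l. l < K \<and> lam l > 0} \<subseteq> ?E" using inE by blast
  ultimately have "v \<in> {vl l | l. l < K \<and> lam l > 0}"
    using vertex_hull[OF vx cE] by blast
  then obtain l where l: "l < K" "lam l > 0" "v = vl l" by blast
  show ?thesis
  proof
    fix i assume i: "i \<in> {1..n}"
    have "zvec v i = zvec (g l) i" using l(3) zvl by simp
    then show "zvec v i \<in> vert_simplex (d i)" using gz[OF l(1) i] by simp
  qed
qed

theorem lemma2:
  fixes n m :: nat
    and d r :: "nat \<Rightarrow> nat"
    and p :: "nat \<Rightarrow> nat \<Rightarrow> real"
    and P :: "(nat \<Rightarrow> real) set"
    and f :: "nat \<Rightarrow> nat \<Rightarrow> real \<Rightarrow> real"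
    and L U :: "nat \<Rightarrow> nat \<Rightarrow> real"
    and \<phi> :: "nat \<Rightarrow> (nat \<Rightarrow> real) \<Rightarrow> real"
    and Q :: "nat \<Rightarrow> (nat + nat \<Rightarrow> real) set"
  assumes "n \<ge> 1" and "m \<ge> 1"
    and "\<forall>i\<in>{1..n}. d i \<ge> 1"
    and "\<forall>i\<in>{1..n}. \<forall>j<d i. p i j < p i (j + 1)"
    and "polytope_in {1..n} P"
    and "\<forall>t\<in>{1..m}. \<forall>i\<in>{1..n}. \<forall>j\<in>{0..d i}. f t i (p i j) \<in> {L t i .. U t i}"
    and "\<forall>i\<in>{1..n}. r i \<ge> 1"
    and "\<forall>i\<in>{1..n}. polytope_in (Inl ` {1..d i} \<union> Inr ` {1..r i}) (Q i)"
    and "\<forall>i\<in>{1..n}. (\<lambda>q j. q (Inl j)) ` (Q i \<inter> {q. \<forall>k\<in>{1..r i}. q (Inr k) \<in> {0, 1}})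
                     = vert_simplex (d i)"
  shows "mip_formulation (IX n \<union> IZ n d \<union> IM m \<union> ID n r) (ID n r) (IX n \<union> IM m)
           (Eset n m d p r f \<phi> P Q) (Target n m d p f \<phi> P)
         \<and> ((\<forall>i\<in>{1..n}. \<forall>q. is_vertex q (Q i) \<longrightarrow> (\<forall>k\<in>{1..r i}. q (Inr k) \<in> {0, 1}))
            \<longrightarrow> (\<forall>v. is_vertex v (Erel n m d p r f \<phi> {x. supp_in {1..n} x} Q)
                      \<longrightarrow> (\<forall>c\<in>ID n r. v c \<in> {0, 1})))"
proof -
  note H9 = assms(9) and HQ = assms(8)
  have finIZ: "finite (IZ n d)"
  proof -
    have "IZ n d = (\<lambda>(i, j). Z i j) ` (SIGMA i:{1..n}. {1..d i})" unfolding IZ_def by auto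
    then show ?thesis by simp
  qed
  have finID: "finite (ID n r)"
  proof -
    have "ID n r = (\<lambda>(i, k). Dl i k) ` (SIGMA i:{1..n}. {1..r i})" unfolding ID_def by auto
    then show ?thesis by simp
  qed
  have finI: "finite (IX n \<union> IZ n d \<union> IM m \<union> ID n r)"
    using finIZ finID unfolding IX_def IM_def by simp
  have part1: "mip_formulation (IX n \<union> IZ n d \<union> IM m \<union> ID n r) (ID n r) (IX n \<union> IM m)
           (Eset n m d p r f \<phi> P Q) (Target n m d p f \<phi> P)"
    unfolding mip_formulation_def
  proof (intro conjI)
    show "ID n r \<subseteq> IX n \<union> IZ n d \<union> IM m \<union> ID n r" by blast
    show "IX n \<union> IM m \<subseteq> IX n \<union> IZ n d \<union> IM m \<union> ID n r" by blast
    show "\<exists>R. polyhedron_in (IX n \<union> IZ n d \<union> IM m \<union> ID n r) R \<and>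
        Eset n m d p r f \<phi> P Q = R \<inter> {v. \<forall>c\<in>ID n r. v c \<in> {0, 1}}"
    proof (rule big_M_poly[OF finI])
      show "ID n r \<subseteq> IX n \<union> IZ n d \<union> IM m \<union> ID n r" by blast
      show "\<forall>s\<in>Eset n m d p r f \<phi> P Q. supp_in (IX n \<union> IZ n d \<union> IM m \<union> ID n r) s"
        using Erel_supp unfolding Eset_def by blast
      show "\<forall>s\<in>Eset n m d p r f \<phi> P Q. \<forall>c\<in>ID n r. s c \<in> {0, 1}"
        unfolding Eset_def by blast
      show "\<forall>s\<in>Eset n m d p r f \<phi> P Q. \<forall>s'\<in>Eset n m d p r f \<phi> P Q. (\<forall>c\<in>ID n r. s c = s' c) \<longrightarrow> s = s'"
        using Eset_unique[OF H9 HQ] by blast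
    qed
    show "restr (IX n \<union> IM m) ` Eset n m d p r f \<phi> P Q = Target n m d p f \<phi> P"
    proof
      show "restr (IX n \<union> IM m) ` Eset n m d p r f \<phi> P Q \<subseteq> Target n m d p f \<phi> P"
        using img_sub[OF H9] by blast
      show "Target n m d p f \<phi> P \<subseteq> restr (IX n \<union> IM m) ` Eset n m d p r f \<phi> P Q"
        using img_sup[OF H9 HQ] by blast
    qed
  qed
  have part2: "(\<forall>i\<in>{1..n}. \<forall>q. is_vertex q (Q i) \<longrightarrow> (\<forall>k\<in>{1..r i}. q (Inr k) \<in> {0, 1}))
            \<longrightarrow> (\<forall>v. is_vertex v (Erel n m d p r f \<phi> {x. supp_in {1..n} x} Q)
                      \<longrightarrow> (\<forall>c\<in>ID n r. v c \<in> {0, 1}))"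
  proof (intro impI allI ballI)
    fix v c
    assume Hid: "\<forall>i\<in>{1..n}. \<forall>q. is_vertex q (Q i) \<longrightarrow> (\<forall>k\<in>{1..r i}. q (Inr k) \<in> {0, 1})"
      and vx: "is_vertex v (Erel n m d p r f \<phi> {x. supp_in {1..n} x} Q)" and c: "c \<in> ID n r"
    have cP: "cvx ({x. supp_in {1..n} x} :: (nat \<Rightarrow> real) set)" unfolding cvx_def supp_in_def by simp
    have zb: "\<forall>i\<in>{1..n}. zvec v i \<in> vert_simplex (d i)" by (rule step1[OF H9 HQ Hid vx])
    show "v c \<in> {0, 1}" by (rule step2[OF H9 HQ Hid cP vx zb c])
  qed
  show ?thesis using part1 part2 by blast
qed

end
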